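(* For the LPE-BC with COF with $K\ge 2$ users and $Q\ge 1$ layers, every achievable rate tuple $(R_1,\dots,R_K)$ (and hence every point of the capacity region) satisfies $$\sum_{k=1}^{K}\omega_k R_k\;\le\;\sum_{q=1}^{Q}\max_{k\in\{1,\dots,K\}}\Big(\omega_{\pi(k)}\,\Pr\big[\max(N_{\pi(k)},N_{\pi(k+1)},\dots,N_{\pi(K)})\ge q\big]\Big)$$ for every weight vector $(\omega_1,\dots,\omega_K)\in\mathbb{R}_+^K$ and every permutation $\pi$ of $\{1,\dots,K\}$.
   Context: Layered packet erasure broadcast channel (LPE-BC) with channel output feedback (COF): fix integers $K$ (number of users) and $Q$ (number of layers) and a finite field $\mathcal{X}$. In each time slot $t$ the transmitter sends $X_t=(X_{1,t},\dots,X_{Q,t})\in\mathcal{X}^Q$. A random channel state $N_t=(N_{1,t},\dots,N_{K,t})\in\{0,1,\dots,Q\}^K$, i.i.d. across slots with an arbitrary fixed joint distribution of the components $(N_1,\dots,N_K)$ (components may be dependent), determines the output of user $k$: $Y_{k,t}=(X_{1,t},\dots,X_{N_{k,t},t})$ if $N_{k,t}>0$ and $Y_{k,t}=\mathsf{e}$ (a fixed erasure symbol) if $N_{k,t}=0$. A code of length $n$ with rates $(R_1,\dots,R_K)$ (measured in packets, i.e. field symbols, per slot) has independent uniform messages $W_k$ taking $|\mathcal{X}|^{nR_k}$ values; with feedback the encoder at time $t$ is $X_t=f_t(W_1,\dots,W_K,N_1,\dots,N_{t-1})$; receiver $k$ knows all states $N_1,\dots,N_n$ and decodes $\hat W_k=\mathrm{dec}_k(Y_k^n,N_1,\dots,N_n)$.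 The error probability is $\Pr[\exists k:\hat W_k\ne W_k]$; a rate tuple is achievable if there is a sequence of codes with error probability tending to $0$ as $n\to\infty$; the capacity region is the convex closure of the set of achievable rate tuples. *)

theory Defs
  imports "HOL-Probability.Probability"
begin

text \<open>
  Users are indexed 0..K-1 (paper: 1..K), layers 1..Q, time slots 0..n-1.
  A channel state is a function N :: nat => nat (N k = number of layers received by user k);
  a transmitted symbol is X :: nat => 'f (X q = packet on layer q, q = 1..Q).
\<close>

definition lpe_output :: "(nat \<Rightarrow> 'f) \<Rightarrow> (nat \<Rightarrow> nat) \<Rightarrow> nat \<Rightarrow> 'f list option" where
  "lpe_output X N k = (if N k = 0 then None else Some (map X [1..<N k + 1]))"

definition num_msgs :: "'f::{finite,field} itself \<Rightarrow> nat \<Rightarrow> real \<Rightarrow> nat" where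
  "num_msgs _ n r = nat \<lfloor>real CARD('f) powr (real n * r)\<rfloor>"

definition msg_set :: "'f::{finite,field} itself \<Rightarrow> nat \<Rightarrow> nat \<Rightarrow> (nat \<Rightarrow> real) \<Rightarrow> (nat \<Rightarrow> nat) set" where
  "msg_set F K n R = PiE {..<K} (\<lambda>k. {..<num_msgs F n (R k)})"

text \<open>Feedback encoder: enc t W past gives X_t from messages W and past states N_0..N_{t-1}
  (passed as the list take t ns). Decoder: dec k Yk ns estimates W k from user k's outputs and all states.\<close>

definition user_outputs ::
  "nat \<Rightarrow> (nat \<Rightarrow> (nat \<Rightarrow> nat) \<Rightarrow> (nat \<Rightarrow> nat) list \<Rightarrow> (nat \<Rightarrow> 'f))
     \<Rightarrow> (nat \<Rightarrow> nat) \<Rightarrow> (nat \<Rightarrow> nat) list \<Rightarrow> nat \<Rightarrow> 'f list option list" where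
  "user_outputs n enc W ns k = map (\<lambda>t. lpe_output (enc t W (take t ns)) (ns ! t) k) [0..<n]"

definition state_set :: "nat \<Rightarrow> nat \<Rightarrow> (nat \<Rightarrow> nat) set" where
  "state_set K Q = {N. (\<forall>k<K. N k \<le> Q) \<and> (\<forall>k\<ge>K. N k = 0)}"

definition error_prob ::
  "'f::{finite,field} itself \<Rightarrow> nat \<Rightarrow> nat \<Rightarrow> (nat \<Rightarrow> nat) pmf \<Rightarrow> nat \<Rightarrow> (nat \<Rightarrow> real)
     \<Rightarrow> (nat \<Rightarrow> (nat \<Rightarrow> nat) \<Rightarrow> (nat \<Rightarrow> nat) list \<Rightarrow> (nat \<Rightarrow> 'f))
     \<Rightarrow> (nat \<Rightarrow> 'f list option list \<Rightarrow> (nat \<Rightarrow> nat) list \<Rightarrow> nat) \<Rightarrow> real" where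
  "error_prob F K Q P n R enc dec =
     (1 / real (card (msg_set F K n R))) *
     (\<Sum>W\<in>msg_set F K n R.
        \<Sum>ns\<in>{ns. length ns = n \<and> set ns \<subseteq> state_set K Q}.
          (\<Prod>t<n. pmf P (ns ! t)) *
          (if \<exists>k<K. dec k (user_outputs n enc W ns k) ns \<noteq> W k then 1 else 0))"

definition achievable ::
  "'f::{finite,field} itself \<Rightarrow> nat \<Rightarrow> nat \<Rightarrow> (nat \<Rightarrow> nat) pmf \<Rightarrow> (nat \<Rightarrow> real) \<Rightarrow> bool" where
  "achievable F K Q P R \<longleftrightarrow> (\<forall>k<K. 0 \<le> R k) \<and>
     (\<exists>enc dec. (\<lambda>n. error_prob F K Q P n R (enc n) (dec n)) \<longlonglongrightarrow> 0)"

end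

theory Submission
  imports Defs
begin


definition pd :: "'a set \<Rightarrow> ('a \<Rightarrow> real) \<Rightarrow> ('a \<Rightarrow> 'x) \<Rightarrow> 'a \<Rightarrow> real" where
  "pd A w X a = sum w {a'\<in>A. X a' = X a}"

definition ent :: "'a set \<Rightarrow> ('a \<Rightarrow> real) \<Rightarrow> ('a \<Rightarrow> 'x) \<Rightarrow> real" where
  "ent A w X = - (\<Sum>a\<in>A. w a * ln (pd A w X a))"

definition cent :: "'a set \<Rightarrow> ('a \<Rightarrow> real) \<Rightarrow> ('a \<Rightarrow> 'x) \<Rightarrow> ('a \<Rightarrow> 'y) \<Rightarrow> real" where
  "cent A w X Y = ent A w (\<lambda>a. (X a, Y a)) - ent A w Y"

locale dstr =
  fixes A :: "'a set" and w :: "'a \<Rightarrow> real"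
  assumes finA: "finite A" and wnn: "\<And>a. a \<in> A \<Longrightarrow> 0 \<le> w a" and wsum: "sum w A = 1"
begin

lemma pd_ge: "a \<in> A \<Longrightarrow> w a \<le> pd A w X a"
  unfolding pd_def using finA wnn by (intro member_le_sum) auto

lemma pd_le1: "pd A w X a \<le> 1"
  unfolding pd_def using wsum sum_mono2[OF finA, of "{a'\<in>A. X a' = X a}" w] wnn by auto

lemma pd_pos: "a \<in> A \<Longrightarrow> 0 < w a \<Longrightarrow> 0 < pd A w X a"
  using pd_ge by (meson less_le_trans)

lemma pd_nn: "0 \<le> pd A w X a"
  unfolding pd_def using wnn by (intro sum_nonneg) auto

lemma ent_nonneg: "0 \<le> ent A w X"
proof -
  have "(\<Sum>a\<in>A. w a * ln (pd A w X a)) \<le> 0"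
  proof (intro sum_nonpos)
    fix a assume a: "a \<in> A"
    show "w a * ln (pd A w X a) \<le> 0"
    proof (cases "w a = 0")
      case False
      then have "0 < pd A w X a" using a wnn[OF a] by (intro pd_pos) auto
      then have "ln (pd A w X a) \<le> 0" using pd_le1 by simp
      then show ?thesis using wnn[OF a] by (simp add: mult_nonneg_nonpos)
    qed simp
  qed
  then show ?thesis unfolding ent_def by simp
qed

lemma pd_cong:
  assumes "\<And>a a'. a \<in> A \<Longrightarrow> a' \<in> A \<Longrightarrow> (X a = X a') = (Y a = Y a')" "a \<in> A"
  shows "pd A w X a = pd A w Y a"
  unfolding pd_def using assms by (intro sum.cong refl Collect_cong) blast

lemma ent_cong:
  assumes "\<And>a a'. a \<in> A \<Longrightarrow> a' \<in> A \<Longrightarrow> (X a = X a') = (Y a = Y a')"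
  shows "ent A w X = ent A w Y"
  unfolding ent_def using pd_cong[OF assms] by (intro arg_cong[where f=uminus] sum.cong) auto

lemma ent_mono:
  assumes "\<And>a a'. a \<in> A \<Longrightarrow> a' \<in> A \<Longrightarrow> Y a = Y a' \<Longrightarrow> X a = X a'"
  shows "ent A w X \<le> ent A w Y"
proof -
  have "(\<Sum>a\<in>A. w a * ln (pd A w Y a)) \<le> (\<Sum>a\<in>A. w a * ln (pd A w X a))"
  proof (intro sum_mono)
    fix a assume a: "a \<in> A"
    show "w a * ln (pd A w Y a) \<le> w a * ln (pd A w X a)"
    proof (cases "w a = 0")
      case False
      then have p: "0 < pd A w Y a" using a wnn[OF a] by (intro pd_pos) auto
      have sub: "{a'\<in>A. Y a' = Y a} \<subseteq> {a'\<in>A. X a' = X a}" using assms a by blast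
      have "pd A w Y a \<le> pd A w X a" unfolding pd_def
        by (rule sum_mono2) (use sub finA wnn in auto)
      then have "ln (pd A w Y a) \<le> ln (pd A w X a)" using p by simp
      then show ?thesis using wnn[OF a] by (simp add: mult_left_mono)
    qed simp
  qed
  then show ?thesis unfolding ent_def by simp
qed

lemma ent_const: "ent A w (\<lambda>a. c) = 0"
  unfolding ent_def pd_def using wsum by simp

lemma sum_group: "(\<Sum>a\<in>A. w a * g (X a)) = (\<Sum>v\<in>X ` A. sum w {a\<in>A. X a = v} * g v)"
proof -
  have "(\<Sum>a\<in>A. w a * g (X a)) = (\<Sum>v\<in>X ` A. \<Sum>a\<in>{a\<in>A. X a = v}. w a * g (X a))"
    by (rule sum.image_gen[OF finA])
  also have "\<dots> = (\<Sum>v\<in>X ` A. sum w {a\<in>A. X a = v} * g v)"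
    by (intro sum.cong refl) (simp add: sum_distrib_right)
  finally show ?thesis .
qed


lemma gibbs:
  assumes qnn: "\<And>v. v \<in> X ` A \<Longrightarrow> 0 \<le> q v" and qs: "sum q (X ` A) \<le> 1"
    and qpos: "\<And>a. a \<in> A \<Longrightarrow> 0 < w a \<Longrightarrow> 0 < q (X a)"
  shows "(\<Sum>a\<in>A. w a * ln (q (X a) / pd A w X a)) \<le> 0"
proof -
  define f where "f v = (if sum w {a\<in>A. X a = v} = 0 then 0 else q v / sum w {a\<in>A. X a = v})" for v
  have "(\<Sum>a\<in>A. w a * ln (q (X a) / pd A w X a)) \<le> (\<Sum>a\<in>A. w a * (f (X a) - 1))"
  proof (intro sum_mono)
    fix a assume a: "a \<in> A"
    show "w a * ln (q (X a) / pd A w X a) \<le> w a * (f (X a) - 1)"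
    proof (cases "w a = 0")
      case False
      then have wp: "0 < w a" using wnn[OF a] by simp
      have p: "0 < pd A w X a" using a wp by (intro pd_pos) auto
      have "f (X a) = q (X a) / pd A w X a" using p unfolding f_def pd_def by auto
      moreover have "ln (q (X a) / pd A w X a) \<le> q (X a) / pd A w X a - 1"
        using qpos[OF a wp] p by (intro ln_le_minus_one) simp
      ultimately show ?thesis using wp by (simp add: mult_left_mono)
    qed simp
  qed
  also have "\<dots> = (\<Sum>a\<in>A. w a * f (X a)) - 1" using wsum
    by (simp add: sum_subtractf right_diff_distrib)
  also have "(\<Sum>a\<in>A. w a * f (X a)) = (\<Sum>v\<in>X ` A. sum w {a\<in>A. X a = v} * f v)"
    by (rule sum_group)
  also have "\<dots> \<le> (\<Sum>v\<in>X ` A. q v)"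
    by (intro sum_mono) (auto simp: f_def qnn)
  finally show ?thesis using qs by simp
qed

lemma ent_le_card:
  shows "ent A w X \<le> ln (card (X ` A))"
proof (cases "A = {}")
  case True then show ?thesis using wsum by simp
next
  case False
  define c where "c = card (X ` A)"
  have cp: "0 < c" using False finA unfolding c_def by (simp add: card_gt_0_iff)
  have g: "(\<Sum>a\<in>A. w a * ln ((\<lambda>v. 1 / real c) (X a) / pd A w X a)) \<le> 0"
    by (rule gibbs) (use cp in \<open>auto simp: c_def\<close>)
  have "(\<Sum>a\<in>A. w a * ln ((\<lambda>v. 1 / real c) (X a) / pd A w X a))
      = (\<Sum>a\<in>A. w a * (- ln c - ln (pd A w X a)))"
  proof (intro sum.cong refl)
    fix a assume a: "a \<in> A"
    show "w a * ln ((\<lambda>v. 1 / real c) (X a) / pd A w X a) = w a * (- ln c - ln (pd A w X a))"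
    proof (cases "w a = 0")
      case False
      then have "0 < pd A w X a" using a wnn[OF a] by (intro pd_pos) auto
      then have "ln (1 / real c / pd A w X a) = ln (1 / real c) - ln (pd A w X a)"
        using cp by (intro ln_divide_pos) auto
      moreover have "ln (1 / real c) = - ln c" using cp by (simp add: ln_div)
      ultimately show ?thesis by simp
    qed simp
  qed
  also have "\<dots> = - ln c + ent A w X" unfolding ent_def using wsum
    by (simp add: right_diff_distrib sum_subtractf sum_negf sum_distrib_right[symmetric])
  finally have "(\<Sum>a\<in>A. w a * ln ((\<lambda>v. 1 / real c) (X a) / pd A w X a)) = - ln c + ent A w X" .
  with g show ?thesis unfolding c_def by linarith
qed

end



context dstr
begin

lemma marg: "(\<Sum>x\<in>X ` A. sum w {a\<in>A. (X a, Z a) = (x, z)}) = sum w {a\<in>A. Z a = z}"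
proof -
  have "(\<Sum>x\<in>X ` A. sum w {a\<in>A. (X a, Z a) = (x, z)})
      = (\<Sum>x\<in>X ` A. \<Sum>a\<in>{a\<in>A. X a = x}. (if Z a = z then w a else 0))"
  proof (rule sum.cong[OF refl])
    fix x
    have e: "{a\<in>A. (X a, Z a) = (x, z)} = {a\<in>{a\<in>A. X a = x}. Z a = z}" by auto
    have "finite {a\<in>A. X a = x}" using finA by simp
    then show "sum w {a\<in>A. (X a, Z a) = (x, z)} = (\<Sum>a\<in>{a\<in>A. X a = x}. (if Z a = z then w a else 0))"
      unfolding e by (rule sum.inter_filter)
  qed
  also have "\<dots> = (\<Sum>a\<in>A. (if Z a = z then w a else 0))"
    by (rule sum.image_gen[OF finA, symmetric])
  also have "\<dots> = sum w {a\<in>A. Z a = z}"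
    by (simp add: sum.inter_filter finA)
  finally show ?thesis .
qed

lemma submod:
  "ent A w (\<lambda>a. (X a, Y a, Z a)) + ent A w Z \<le> ent A w (\<lambda>a. (X a, Z a)) + ent A w (\<lambda>a. (Y a, Z a))"
proof -
  define G where "G a = (X a, Y a, Z a)" for a
  define PZ where "PZ z = sum w {a\<in>A. Z a = z}" for z
  define PXZ where "PXZ x z = sum w {a\<in>A. (X a, Z a) = (x, z)}" for x z
  define PYZ where "PYZ y z = sum w {a\<in>A. (Y a, Z a) = (y, z)}" for y z
  define q where "q v = (case v of (x, y, z) \<Rightarrow> PXZ x z * PYZ y z / PZ z)" for v
  have PZnn: "0 \<le> PZ z" for z unfolding PZ_def using wnn by (intro sum_nonneg) auto
  have PXZnn: "0 \<le> PXZ x z" for x z unfolding PXZ_def using wnn by (intro sum_nonneg) auto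
  have PYZnn: "0 \<le> PYZ x z" for x z unfolding PYZ_def using wnn by (intro sum_nonneg) auto
  have qnn: "0 \<le> q v" for v unfolding q_def using PZnn PXZnn PYZnn
    by (auto split: prod.splits)
  have fin3: "finite (X ` A \<times> Y ` A \<times> Z ` A)" using finA by auto
  have "sum q (G ` A) \<le> sum q (X ` A \<times> Y ` A \<times> Z ` A)"
    by (rule sum_mono2[OF fin3]) (auto simp: G_def qnn)
  also have "\<dots> = (\<Sum>x\<in>X ` A. \<Sum>y\<in>Y ` A. \<Sum>z\<in>Z ` A. PXZ x z * PYZ y z / PZ z)"
    by (simp add: sum.cartesian_product q_def)
  also have "\<dots> = (\<Sum>z\<in>Z ` A. \<Sum>x\<in>X ` A. \<Sum>y\<in>Y ` A. PXZ x z * PYZ y z / PZ z)"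
    by (subst sum.swap) (intro sum.cong refl sum.swap)
  also have "\<dots> = (\<Sum>z\<in>Z ` A. (\<Sum>x\<in>X ` A. PXZ x z) * (\<Sum>y\<in>Y ` A. PYZ y z) / PZ z)"
    apply (simp add: sum_distrib_right sum_distrib_left sum_divide_distrib)
    apply (rule sum.cong[OF refl])
    apply (rule sum.swap)
    done
  also have "\<dots> = (\<Sum>z\<in>Z ` A. PZ z * PZ z / PZ z)"
    using marg[of X Z] marg[of Y Z] unfolding PXZ_def PYZ_def PZ_def by simp
  also have "\<dots> \<le> (\<Sum>z\<in>Z ` A. PZ z)"
    by (intro sum_mono) (auto simp: PZnn)
  also have "\<dots> = sum w A"
    unfolding PZ_def by (rule sum.image_gen[OF finA, symmetric])
  finally have qs: "sum q (G ` A) \<le> 1" using wsum by simp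
  have pdG: "pd A w G a = sum w {a'\<in>A. G a' = G a}" for a unfolding pd_def ..
  have qG: "q (G a) = pd A w (\<lambda>a. (X a, Z a)) a * pd A w (\<lambda>a. (Y a, Z a)) a / pd A w Z a" for a
    unfolding q_def G_def PXZ_def PYZ_def PZ_def pd_def by simp
  have qpos: "0 < q (G a)" if "a \<in> A" "0 < w a" for a
    unfolding qG using that by (intro divide_pos_pos mult_pos_pos pd_pos) auto
  have gb: "(\<Sum>a\<in>A. w a * ln (q (G a) / pd A w G a)) \<le> 0"
    by (rule gibbs) (use qnn qs qpos in auto)
  have "(\<Sum>a\<in>A. w a * ln (q (G a) / pd A w G a)) =
     (\<Sum>a\<in>A. w a * ln (pd A w (\<lambda>a. (X a, Z a)) a) + w a * ln (pd A w (\<lambda>a. (Y a, Z a)) a)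
        - w a * ln (pd A w Z a) - w a * ln (pd A w G a))"
  proof (intro sum.cong refl)
    fix a assume a: "a \<in> A"
    show "w a * ln (q (G a) / pd A w G a) =
      w a * ln (pd A w (\<lambda>a. (X a, Z a)) a) + w a * ln (pd A w (\<lambda>a. (Y a, Z a)) a)
        - w a * ln (pd A w Z a) - w a * ln (pd A w G a)"
    proof (cases "w a = 0")
      case False
      then have wp: "0 < w a" using wnn[OF a] by simp
      have p1: "0 < pd A w (\<lambda>a. (X a, Z a)) a" and p2: "0 < pd A w (\<lambda>a. (Y a, Z a)) a"
        and p3: "0 < pd A w Z a" and p4: "0 < pd A w G a" using a wp by (auto intro!: pd_pos)
      have "ln (q (G a) / pd A w G a) = ln (pd A w (\<lambda>a. (X a, Z a)) a) + ln (pd A w (\<lambda>a. (Y a, Z a)) a)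
          - ln (pd A w Z a) - ln (pd A w G a)"
        unfolding qG using p1 p2 p3 p4 by (simp add: ln_divide_pos ln_mult)
      then show ?thesis by (simp only:) (simp add: algebra_simps)
    qed simp
  qed
  also have "\<dots> = - ent A w (\<lambda>a. (X a, Z a)) - ent A w (\<lambda>a. (Y a, Z a)) + ent A w Z + ent A w G"
    unfolding ent_def by (simp add: sum.distrib sum_subtractf)
  finally show ?thesis using gb unfolding G_def by linarith
qed



lemma cent_mono:
  assumes dep: "\<And>a a'. a \<in> A \<Longrightarrow> a' \<in> A \<Longrightarrow> Y a = Y a' \<Longrightarrow> Z a = Z a'"
  shows "cent A w X Y \<le> cent A w X Z"
proof -
  have s: "ent A w (\<lambda>a. (X a, Y a, Z a)) + ent A w Z \<le> ent A w (\<lambda>a. (X a, Z a)) + ent A w (\<lambda>a. (Y a, Z a))"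
    by (rule submod)
  have e1: "ent A w (\<lambda>a. (X a, Y a, Z a)) = ent A w (\<lambda>a. (X a, Y a))"
    by (rule ent_cong) (metis dep prod.inject)
  have e2: "ent A w (\<lambda>a. (Y a, Z a)) = ent A w Y"
    by (rule ent_cong) (metis dep prod.inject)
  show ?thesis using s e1 e2 unfolding cent_def by linarith
qed

lemma cent_nonneg: "0 \<le> cent A w X Y"
  unfolding cent_def using ent_mono[of "\<lambda>a. (X a, Y a)" Y] by auto

lemma cent_const: "cent A w X (\<lambda>a. c) = ent A w X"
proof -
  have "ent A w (\<lambda>a. (X a, c)) = ent A w X" by (rule ent_cong) auto
  then show ?thesis unfolding cent_def ent_const by simp
qed

lemma cent_le_ent: "cent A w X Y \<le> ent A w X"
  using cent_mono[of Y "\<lambda>a. ()" X] cent_const[of X "()"] by simp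

lemma subadd: "ent A w (\<lambda>a. (X a, Y a)) \<le> ent A w X + ent A w Y"
proof -
  have "ent A w (\<lambda>a. (X a, Y a, ())) + ent A w (\<lambda>a. ()) \<le>
     ent A w (\<lambda>a. (X a, ())) + ent A w (\<lambda>a. (Y a, ()))"
    by (rule submod)
  moreover have "ent A w (\<lambda>a. (X a, Y a, ())) = ent A w (\<lambda>a. (X a, Y a))" by (rule ent_cong) auto
  moreover have "ent A w (\<lambda>a. (X a, ())) = ent A w X" by (rule ent_cong) auto
  moreover have "ent A w (\<lambda>a. (Y a, ())) = ent A w Y" by (rule ent_cong) auto
  ultimately show ?thesis using ent_const[of "()"] by linarith
qed

lemma cent_zero:
  assumes "\<And>a a'. a \<in> A \<Longrightarrow> a' \<in> A \<Longrightarrow> Y a = Y a' \<Longrightarrow> X a = X a'"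
  shows "cent A w X Y = 0"
  unfolding cent_def by (subst ent_cong[of _ Y]) (metis assms prod.inject, simp)

end

lemma pd_sum_if: "finite A \<Longrightarrow> pd A w X a = (\<Sum>a'\<in>A. if X a' = X a then w a' else 0)"
  unfolding pd_def by (simp add: sum.inter_filter)

lemma ent_bij:
  assumes bij: "bij_betw h A B" and hw: "\<And>a. a \<in> A \<Longrightarrow> w a = v (h a)"
    and hX: "\<And>a. a \<in> A \<Longrightarrow> X a = Y (h a)" and fin: "finite A"
  shows "ent A w X = ent B v Y"
proof -
  have finB: "finite B" using bij fin bij_betw_finite by blast
  have pdeq: "pd B v Y (h a) = pd A w X a" if a: "a \<in> A" for a
  proof -
    have "pd B v Y (h a) = (\<Sum>b\<in>B. if Y b = Y (h a) then v b else 0)" by (rule pd_sum_if[OF finB])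
    also have "\<dots> = (\<Sum>a'\<in>A. if Y (h a') = Y (h a) then v (h a') else 0)"
      by (rule sum.reindex_bij_betw[OF bij, symmetric])
    also have "\<dots> = (\<Sum>a'\<in>A. if X a' = X a then w a' else 0)"
      using a hw hX by (intro sum.cong refl) auto
    also have "\<dots> = pd A w X a" by (rule pd_sum_if[OF fin, symmetric])
    finally show ?thesis .
  qed
  have "ent B v Y = - (\<Sum>b\<in>B. v b * ln (pd B v Y b))" unfolding ent_def ..
  also have "\<dots> = - (\<Sum>a\<in>A. v (h a) * ln (pd B v Y (h a)))"
    by (subst sum.reindex_bij_betw[OF bij, symmetric]) simp
  also have "\<dots> = ent A w X" unfolding ent_def using hw pdeq by (simp cong: sum.cong)
  finally show ?thesis ..
qed

lemma cent_bij:
  assumes bij: "bij_betw h A B" and hw: "\<And>a. a \<in> A \<Longrightarrow> w a = v (h a)"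
    and hX: "\<And>a. a \<in> A \<Longrightarrow> X a = X' (h a)" and hY: "\<And>a. a \<in> A \<Longrightarrow> Y a = Y' (h a)"
    and fin: "finite A"
  shows "cent A w X Y = cent B v X' Y'"
proof -
  have "ent A w (\<lambda>a. (X a, Y a)) = ent B v (\<lambda>b. (X' b, Y' b))"
    by (rule ent_bij[OF bij]) (auto simp: hw hX hY fin)
  moreover have "ent A w Y = ent B v Y'"
    by (rule ent_bij[OF bij]) (auto simp: hw hY fin)
  ultimately show ?thesis unfolding cent_def by simp
qed

lemma ent_prod:
  fixes G :: "'a \<times> 'b \<Rightarrow> 'x"
  assumes da: "dstr SA \<alpha>" and finB: "finite SB" and bnn: "\<And>b. b \<in> SB \<Longrightarrow> 0 \<le> \<beta> b"
    and hG: "\<And>a b a' b'. a \<in> SA \<Longrightarrow> b \<in> SB \<Longrightarrow> a' \<in> SA \<Longrightarrow> b' \<in> SB \<Longrightarrow> G (a, b) = G (a', b') \<Longrightarrow> b = b'"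
  shows "ent (SA \<times> SB) (\<lambda>(a, b). \<alpha> a * \<beta> b) G =
     - (\<Sum>b\<in>SB. \<beta> b * ln (\<beta> b)) + (\<Sum>b\<in>SB. \<beta> b * ent SA \<alpha> (\<lambda>a. G (a, b)))"
proof -
  interpret dstr SA \<alpha> by fact
  define ww where "ww = (\<lambda>(a, b). \<alpha> a * \<beta> b)"
  have pdp: "pd (SA \<times> SB) ww G (a, b) = \<beta> b * pd SA \<alpha> (\<lambda>a. G (a, b)) a" if "a \<in> SA" "b \<in> SB" for a b
  proof -
    have "{p \<in> SA \<times> SB. G p = G (a, b)} = {a' \<in> SA. G (a', b) = G (a, b)} \<times> {b}"
      using hG that by auto
    moreover have "(\<Sum>x\<in>{a' \<in> SA. G (a', b) = G (a, b)}. \<alpha> x * \<beta> b) = \<beta> b * sum \<alpha> {a' \<in> SA. G (a', b) = G (a, b)}"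
      by (subst mult.commute) (rule sum_distrib_right[symmetric])
    ultimately show ?thesis unfolding pd_def ww_def
      by (simp add: sum.cartesian_product[symmetric])
  qed
  have "ent (SA \<times> SB) ww G = - (\<Sum>a\<in>SA. \<Sum>b\<in>SB. ww (a, b) * ln (pd (SA \<times> SB) ww G (a, b)))"
    unfolding ent_def by (simp add: sum.cartesian_product)
  also have "\<dots> = - (\<Sum>a\<in>SA. \<Sum>b\<in>SB. \<alpha> a * \<beta> b * ln (\<beta> b) + \<beta> b * (\<alpha> a * ln (pd SA \<alpha> (\<lambda>a. G (a, b)) a)))"
  proof (intro arg_cong[where f=uminus] sum.cong refl)
    fix a b assume a: "a \<in> SA" and b: "b \<in> SB"
    show "ww (a, b) * ln (pd (SA \<times> SB) ww G (a, b)) =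
        \<alpha> a * \<beta> b * ln (\<beta> b) + \<beta> b * (\<alpha> a * ln (pd SA \<alpha> (\<lambda>a. G (a, b)) a))"
    proof (cases "\<alpha> a = 0 \<or> \<beta> b = 0")
      case True then show ?thesis unfolding ww_def by auto
    next
      case False
      then have ap: "0 < \<alpha> a" and bp: "0 < \<beta> b" using wnn[OF a] bnn[OF b] by auto
      have pp: "0 < pd SA \<alpha> (\<lambda>a. G (a, b)) a" using a ap by (intro pd_pos) auto
      show ?thesis unfolding pdp[OF a b] unfolding ww_def using bp pp by (simp add: ln_mult algebra_simps)
    qed
  qed
  also have "\<dots> = - ((\<Sum>a\<in>SA. \<alpha> a) * (\<Sum>b\<in>SB. \<beta> b * ln (\<beta> b)) +
       (\<Sum>b\<in>SB. \<beta> b * (\<Sum>a\<in>SA. \<alpha> a * ln (pd SA \<alpha> (\<lambda>a. G (a, b)) a))))"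
    by (simp add: sum.distrib sum_distrib_left sum_distrib_right sum.swap[of _ SA] mult.assoc)
  also have "\<dots> = - (\<Sum>b\<in>SB. \<beta> b * ln (\<beta> b)) + (\<Sum>b\<in>SB. \<beta> b * ent SA \<alpha> (\<lambda>a. G (a, b)))"
    using wsum unfolding ent_def by (simp add: sum_negf)
  finally show ?thesis unfolding ww_def .
qed

lemma factor:
  fixes F :: "'a \<times> 'b \<Rightarrow> 'x option" and C :: "'a \<times> 'b \<Rightarrow> 'c" and c0 :: "'a \<Rightarrow> 'd"
  assumes da: "dstr SA \<alpha>" and finB: "finite SB" and bnn: "\<And>b. b \<in> SB \<Longrightarrow> 0 \<le> \<beta> b"
    and hF: "\<And>a b. a \<in> SA \<Longrightarrow> b \<in> SB \<Longrightarrow> F (a, b) = (if E b then Some (f a) else None)"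
    and hC1: "\<And>a b a' b'. a \<in> SA \<Longrightarrow> b \<in> SB \<Longrightarrow> a' \<in> SA \<Longrightarrow> b' \<in> SB \<Longrightarrow> C (a, b) = C (a', b') \<Longrightarrow> b = b'"
    and hC2: "\<And>a b a'. a \<in> SA \<Longrightarrow> b \<in> SB \<Longrightarrow> a' \<in> SA \<Longrightarrow> E b \<Longrightarrow> (C (a, b) = C (a', b)) = (c0 a = c0 a')"
  shows "cent (SA \<times> SB) (\<lambda>(a, b). \<alpha> a * \<beta> b) F C = (\<Sum>b\<in>{b\<in>SB. E b}. \<beta> b) * cent SA \<alpha> f c0"
proof -
  interpret dstr SA \<alpha> by fact
  have e1: "ent (SA \<times> SB) (\<lambda>(a, b). \<alpha> a * \<beta> b) (\<lambda>p. (F p, C p)) =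
     - (\<Sum>b\<in>SB. \<beta> b * ln (\<beta> b)) + (\<Sum>b\<in>SB. \<beta> b * ent SA \<alpha> (\<lambda>a. (F (a, b), C (a, b))))"
    by (rule ent_prod[OF da finB bnn]) (use hC1 in auto)
  have e2: "ent (SA \<times> SB) (\<lambda>(a, b). \<alpha> a * \<beta> b) C =
     - (\<Sum>b\<in>SB. \<beta> b * ln (\<beta> b)) + (\<Sum>b\<in>SB. \<beta> b * ent SA \<alpha> (\<lambda>a. C (a, b)))"
    by (rule ent_prod[OF da finB bnn]) (use hC1 in auto)
  have per: "ent SA \<alpha> (\<lambda>a. (F (a, b), C (a, b))) - ent SA \<alpha> (\<lambda>a. C (a, b)) =
      (if E b then cent SA \<alpha> f c0 else 0)" if b: "b \<in> SB" for b
  proof (cases "E b")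
    case True
    have "ent SA \<alpha> (\<lambda>a. (F (a, b), C (a, b))) = ent SA \<alpha> (\<lambda>a. (f a, c0 a))"
      by (rule ent_cong) (use True hF hC2 b in auto)
    moreover have "ent SA \<alpha> (\<lambda>a. C (a, b)) = ent SA \<alpha> c0"
      by (rule ent_cong) (use True hC2 b in auto)
    ultimately show ?thesis using True unfolding cent_def by simp
  next
    case False
    have "ent SA \<alpha> (\<lambda>a. (F (a, b), C (a, b))) = ent SA \<alpha> (\<lambda>a. C (a, b))"
      by (rule ent_cong) (use False hF b in auto)
    then show ?thesis using False by simp
  qed
  have "cent (SA \<times> SB) (\<lambda>(a, b). \<alpha> a * \<beta> b) F C =
     (\<Sum>b\<in>SB. \<beta> b * (ent SA \<alpha> (\<lambda>a. (F (a, b), C (a, b))) - ent SA \<alpha> (\<lambda>a. C (a, b))))"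
    unfolding cent_def e1 e2 by (simp add: sum_subtractf right_diff_distrib)
  also have "\<dots> = (\<Sum>b\<in>SB. \<beta> b * (if E b then cent SA \<alpha> f c0 else 0))"
    using per by (intro sum.cong refl) simp
  also have "\<dots> = (\<Sum>b\<in>SB. if E b then \<beta> b * cent SA \<alpha> f c0 else 0)"
    by (intro sum.cong refl) simp
  also have "\<dots> = (\<Sum>b\<in>{b\<in>SB. E b}. \<beta> b * cent SA \<alpha> f c0)"
    using finB by (simp add: sum.inter_filter)
  also have "\<dots> = (\<Sum>b\<in>{b\<in>SB. E b}. \<beta> b) * cent SA \<alpha> f c0"
    by (simp add: sum_distrib_right)
  finally show ?thesis .
qed


context dstr begin
lemma cent_snoc:
  "cent A w (\<lambda>a. f a @ [g a]) C = cent A w g (\<lambda>a. (f a, C a)) + cent A w f C"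
proof -
  have "ent A w (\<lambda>a. (f a @ [g a], C a)) = ent A w (\<lambda>a. (g a, f a, C a))"
    by (rule ent_cong) auto
  then show ?thesis unfolding cent_def by simp
qed
end




lemma xlnx_le1: "0 \<le> x \<Longrightarrow> - (x * ln x) \<le> 1" for x :: real
proof (cases "x = 0")
  case False
  assume x: "0 \<le> x"
  then have xp: "0 < x" using False by simp
  have "ln (1 / x) \<le> 1 / x - 1" using xp by (intro ln_le_minus_one) simp
  then have "- ln x \<le> 1 / x - 1" using xp by (simp add: ln_div)
  then have "x * (- ln x) \<le> x * (1 / x - 1)" using xp by (intro mult_left_mono) auto
  then show ?thesis using xp by (simp add: algebra_simps)
qed simp

lemma xlnx_sqrt: "0 \<le> x \<Longrightarrow> - (x * ln x) \<le> 2 * sqrt x" for x :: real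
proof (cases "x = 0")
  case False
  assume x: "0 \<le> x"
  then have xp: "0 < x" using False by simp
  have sp: "0 < sqrt x" using xp by simp
  have "ln (1 / sqrt x) \<le> 1 / sqrt x - 1" using sp by (intro ln_le_minus_one) simp
  moreover have "ln (1 / sqrt x) = - ln x / 2" using xp by (simp add: ln_div ln_sqrt)
  ultimately have "- ln x \<le> 2 / sqrt x - 2" by simp
  then have "x * (- ln x) \<le> x * (2 / sqrt x - 2)" using xp by (intro mult_left_mono) auto
  also have "x * (2 / sqrt x - 2) = 2 * sqrt x - 2 * x"
    using xp by (simp add: field_simps real_sqrt_mult[symmetric] flip: power2_eq_square)
  finally show ?thesis using xp by simp
qed simp

context dstr
begin

lemma sum_P_set: "(\<Sum>v\<in>V \<inter> D ` A. sum w {a\<in>A. D a = v}) = sum w {a\<in>A. D a \<in> V}"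
proof -
  have fin: "finite {a\<in>A. D a \<in> V}" using finA by simp
  have "sum w {a\<in>A. D a \<in> V} = (\<Sum>v\<in>D ` {a\<in>A. D a \<in> V}. sum w {a\<in>{a\<in>A. D a \<in> V}. D a = v})"
    by (rule sum.image_gen[OF fin])
  also have "D ` {a\<in>A. D a \<in> V} = V \<inter> D ` A" by auto
  also have "(\<Sum>v\<in>V \<inter> D ` A. sum w {a\<in>{a\<in>A. D a \<in> V}. D a = v}) = (\<Sum>v\<in>V \<inter> D ` A. sum w {a\<in>A. D a = v})"
    by (intro sum.cong refl arg_cong[where f="sum w"]) auto
  finally show ?thesis ..
qed

lemma ent_value_form: "ent A w D = (\<Sum>v\<in>D ` A. - (sum w {a\<in>A. D a = v} * ln (sum w {a\<in>A. D a = v})))"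
proof -
  have "ent A w D = - (\<Sum>a\<in>A. w a * (\<lambda>v. ln (sum w {a\<in>A. D a = v})) (D a))"
    unfolding ent_def pd_def by simp
  also have "\<dots> = - (\<Sum>v\<in>D ` A. sum w {a\<in>A. D a = v} * ln (sum w {a\<in>A. D a = v}))"
    by (subst sum_group) simp
  finally show ?thesis by (simp add: sum_negf)
qed

lemma fano:
  fixes X Xh :: "'a \<Rightarrow> nat"
  assumes rng: "\<And>a. a \<in> A \<Longrightarrow> X a < m" and m: "1 \<le> m"
  shows "cent A w X Xh \<le> 3 + 2 * sum w {a\<in>A. X a \<noteq> Xh a} * ln m"
proof -
  define D where "D a = (if X a = Xh a then None else Some (X a))" for a
  define P where "P v = sum w {a\<in>A. D a = v}" for v
  have Pnn: "0 \<le> P v" for v unfolding P_def using wnn by (intro sum_nonneg) auto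
  have "cent A w X Xh = ent A w (\<lambda>a. (D a, Xh a)) - ent A w Xh"
    unfolding cent_def by (subst ent_cong[of _ "\<lambda>a. (D a, Xh a)"]) (auto simp: D_def split: if_splits)
  also have "\<dots> \<le> ent A w D" using subadd[of D Xh] by simp
  also have "ent A w D = (\<Sum>v\<in>D ` A. - (P v * ln (P v)))" unfolding P_def by (rule ent_value_form)
  also have "\<dots> = (\<Sum>v\<in>{None} \<inter> D ` A. - (P v * ln (P v))) + (\<Sum>v\<in>(-{None}) \<inter> D ` A. - (P v * ln (P v)))"
    using finA by (subst sum.union_disjoint[symmetric]) (auto intro!: sum.cong)
  also have "(\<Sum>v\<in>{None} \<inter> D ` A. - (P v * ln (P v))) \<le> 1"
  proof (cases "None \<in> D ` A")
    case True then have "{None} \<inter> D ` A = {None}" by auto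
    then show ?thesis using xlnx_le1[OF Pnn] by simp
  next
    case False then have "{None} \<inter> D ` A = {}" by auto
    then show ?thesis by simp
  qed
  also have "(\<Sum>v\<in>(-{None}) \<inter> D ` A. - (P v * ln (P v))) \<le>
       (\<Sum>v\<in>(-{None}) \<inter> D ` A. 2 * ln m * P v + 2 / m)"
  proof (intro sum_mono)
    fix v assume "v \<in> (-{None}) \<inter> D ` A"
    show "- (P v * ln (P v)) \<le> 2 * ln m * P v + 2 / m"
    proof (cases "P v < 1 / (real m)^2")
      case True
      have "- (P v * ln (P v)) \<le> 2 * sqrt (P v)" by (rule xlnx_sqrt[OF Pnn])
      also have "sqrt (P v) \<le> sqrt (1 / (real m)^2)" using True by simp
      also have "sqrt (1 / (real m)^2) = 1 / m" using m by (simp add: real_sqrt_divide)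
      finally have "- (P v * ln (P v)) \<le> 2 / m" by simp
      moreover have "0 \<le> 2 * ln m * P v" using m Pnn by simp
      ultimately show ?thesis by linarith
    next
      case False
      then have pp: "0 < P v" using m by (smt (verit) divide_pos_pos of_nat_0_less_iff zero_less_power le_less_trans less_le_trans of_nat_1 of_nat_le_iff zero_less_one)
      have "ln (1 / (real m)^2) \<le> ln (P v)" using False pp m by (subst ln_le_cancel_iff) auto
      moreover have "ln (1 / (real m)^2) = - (2 * ln m)" using m by (simp add: ln_div ln_realpow)
      ultimately have "- ln (P v) \<le> 2 * ln m" by simp
      then have "P v * (- ln (P v)) \<le> P v * (2 * ln m)" using Pnn by (intro mult_left_mono) auto
      then have "- (P v * ln (P v)) \<le> 2 * ln m * P v" by (simp add: algebra_simps)
      moreover have "0 \<le> 2 / real m" by simp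
      ultimately show ?thesis by linarith
    qed
  qed
  also have "\<dots> = 2 * ln m * (\<Sum>v\<in>(-{None}) \<inter> D ` A. P v) + card ((-{None}) \<inter> D ` A) * (2 / m)"
    by (simp add: sum.distrib sum_distrib_left)
  also have "(\<Sum>v\<in>(-{None}) \<inter> D ` A. P v) = sum w {a\<in>A. X a \<noteq> Xh a}"
    unfolding P_def sum_P_set by (intro arg_cong[where f="sum w"]) (auto simp: D_def)
  also have "card ((-{None}) \<inter> D ` A) * (2 / m) \<le> m * (2 / m)"
  proof -
    have "(-{None}) \<inter> D ` A \<subseteq> Some ` {..<m}" using rng by (auto simp: D_def)
    then have "card ((-{None}) \<inter> D ` A) \<le> card (Some ` {..<m})" by (intro card_mono) auto
    also have "\<dots> = m" by (simp add: card_image)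
    finally show ?thesis by (intro mult_right_mono) auto
  qed
  also have "real m * (2 / real m) = 2" using m by simp
  finally show ?thesis by (simp add: algebra_simps)
qed

end



lemma finite_state_set: "finite (state_set K Q)"
proof -
  define ext where "ext f = (\<lambda>k. if k < K then f k else (0::nat))" for f :: "nat \<Rightarrow> nat"
  have "state_set K Q \<subseteq> ext ` (PiE {..<K} (\<lambda>_. {..Q}))"
  proof
    fix N assume N: "N \<in> state_set K Q"
    have "N = ext (restrict N {..<K})" using N unfolding ext_def state_set_def
      by (auto simp: fun_eq_iff)
    moreover have "restrict N {..<K} \<in> PiE {..<K} (\<lambda>_. {..Q})" using N unfolding state_set_def by auto
    ultimately show "N \<in> ext ` (PiE {..<K} (\<lambda>_. {..Q}))" by blast
  qed
  then show ?thesis by (rule finite_subset) (intro finite_imageI finite_PiE; simp)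
qed

lemma zero_state: "(\<lambda>_. 0) \<in> state_set K Q"
  unfolding state_set_def by simp

locale chan =
  fixes K Q :: nat and P :: "(nat \<Rightarrow> nat) pmf" and \<pi> :: "nat \<Rightarrow> nat"
    and mm :: "nat \<Rightarrow> nat" and n :: nat
    and enc :: "nat \<Rightarrow> (nat \<Rightarrow> nat) \<Rightarrow> (nat \<Rightarrow> nat) list \<Rightarrow> (nat \<Rightarrow> 'f::finite)"
  assumes K2: "1 \<le> K" and Q1: "1 \<le> Q" and supp: "set_pmf P \<subseteq> state_set K Q"
    and perm: "\<pi> permutes {..<K}" and mm1: "\<And>k. 1 \<le> mm k"
begin

definition "SSt = state_set K Q"
definition "LSt m = {ns. length ns = m \<and> set ns \<subseteq> SSt}"
definition "prl ns = prod_list (map (pmf P) ns)"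
definition "MSg = PiE {..<K} (\<lambda>k. {..<mm k})"
definition "Omg = MSg \<times> LSt n"
definition "wtg om = prl (snd om) / card MSg"
definition "Mx k N = Max ((\<lambda>j. N (\<pi> j)) ` {k..<K})"
definition "tt i = i div Q"
definition "qq i = i mod Q + 1"
definition "Z k i om = (if qq i \<le> Mx k (snd om ! tt i)
    then Some (enc (tt i) (fst om) (take (tt i) (snd om)) (qq i)) else None)"
definition "Pre k i om = map (\<lambda>j. Z k j om) [0..<i]"
definition "V k om = map (\<lambda>j. fst om (\<pi> j)) [k..<K]"
definition "Atg t = MSg \<times> LSt t"
definition "alpha a = prl (snd a) / card MSg"
definition "Z0 k t j a = (if tt j < t \<and> \<not> qq j \<le> Mx k (snd a ! tt j) then None
    else Some (enc (tt j) (fst a) (take (tt j) (snd a)) (qq j)))"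
definition "Pre0 k t i a = map (\<lambda>j. Z0 k t j a) [0..<i]"
definition "hh k i U = cent (Atg (tt i)) alpha (\<lambda>a. enc (tt i) (fst a) (snd a) (qq i))
    (\<lambda>a. (Pre0 k (tt i) i a, snd a, U a))"
definition "pk k q = measure_pmf.prob P {N. q \<le> Mx k N}"

lemma finSS: "finite SSt" unfolding SSt_def by (rule finite_state_set)
lemma finLS: "finite (LSt m)" unfolding LSt_def using finite_lists_length_eq[OF finSS, of m]
  by (simp add: conj_commute)
lemma finMS: "finite MSg" unfolding MSg_def by (intro finite_PiE) auto
lemma MS_ne: "MSg \<noteq> {}" unfolding MSg_def using mm1 by (auto simp: PiE_eq_empty_iff Suc_le_eq)
lemma cardMS: "0 < card MSg" using finMS MS_ne by (simp add: card_gt_0_iff)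
lemma pr_nn: "0 \<le> prl ns" unfolding prl_def by (induction ns) auto
lemma sum_pmf_SS: "sum (pmf P) SSt = 1" using sum_pmf_eq_1[OF finSS] supp unfolding SSt_def by auto

lemma LS_Suc: "LSt (Suc m) = (\<lambda>(s, ns). s # ns) ` (SSt \<times> LSt m)"
  unfolding LSt_def by (auto simp: length_Suc_conv)

lemma sum_pr: "sum prl (LSt m) = 1"
proof (induction m)
  case 0
  have "LSt 0 = {[]}" unfolding LSt_def by auto
  then show ?case by (simp add: prl_def)
next
  case (Suc m)
  have inj: "inj_on (\<lambda>(s, ns). s # ns) (SSt \<times> LSt m)" by (auto simp: inj_on_def)
  have "sum prl (LSt (Suc m)) = (\<Sum>(s, ns)\<in>SSt \<times> LSt m. prl (s # ns))"
    unfolding LS_Suc by (subst sum.reindex[OF inj]) (simp add: case_prod_unfold)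
  also have "\<dots> = (\<Sum>s\<in>SSt. \<Sum>ns\<in>LSt m. pmf P s * prl ns)"
    by (simp add: sum.cartesian_product prl_def)
  also have "\<dots> = sum (pmf P) SSt * sum prl (LSt m)"
    by (rule sum_product[symmetric])
  finally show ?case using Suc sum_pmf_SS by simp
qed

lemma dstr_Om: "dstr Omg wtg"
proof
  show "finite Omg" unfolding Omg_def using finMS finLS by simp
  show "0 \<le> wtg a" for a unfolding wtg_def using pr_nn by simp
  have "sum wtg Omg = (\<Sum>W\<in>MSg. \<Sum>ns\<in>LSt n. prl ns / card MSg)"
    unfolding Omg_def wtg_def by (subst sum.cartesian_product) (simp add: case_prod_unfold)
  also have "\<dots> = card MSg * (1 / card MSg)"
    using sum_pr[of n] by (simp add: sum_divide_distrib[symmetric])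
  finally show "sum wtg Omg = 1" using cardMS by simp
qed

lemma dstr_At: "dstr (Atg t) alpha"
proof
  show "finite (Atg t)" unfolding Atg_def using finMS finLS by simp
  show "0 \<le> alpha a" for a unfolding alpha_def using pr_nn by simp
  have "sum alpha (Atg t) = (\<Sum>W\<in>MSg. \<Sum>ns\<in>LSt t. prl ns / card MSg)"
    unfolding Atg_def alpha_def by (subst sum.cartesian_product) (simp add: case_prod_unfold)
  also have "\<dots> = card MSg * (1 / card MSg)"
    using sum_pr[of t] by (simp add: sum_divide_distrib[symmetric])
  finally show "sum alpha (Atg t) = 1" using cardMS by simp
qed


lemma chain:
  "cent Omg wtg (Pre k i) C = (\<Sum>j<i. cent Omg wtg (Z k j) (\<lambda>om. (Pre k j om, C om)))"
proof (induction i)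
  case 0
  interpret dstr Omg wtg by (rule dstr_Om)
  show ?case unfolding Pre_def by (simp add: cent_zero)
next
  case (Suc i)
  interpret dstr Omg wtg by (rule dstr_Om)
  have "Pre k (Suc i) = (\<lambda>om. Pre k i om @ [Z k i om])" unfolding Pre_def by (auto simp: fun_eq_iff)
  then have "cent Omg wtg (Pre k (Suc i)) C = cent Omg wtg (Z k i) (\<lambda>om. (Pre k i om, C om)) + cent Omg wtg (Pre k i) C"
    using cent_snoc[of "Pre k i" "Z k i" C] by simp
  then show ?case using Suc by simp
qed

lemma tt_le: "j < i \<Longrightarrow> tt j \<le> tt i" unfolding tt_def by (simp add: div_le_mono)

lemma qq_lt: "j < i \<Longrightarrow> tt j = tt i \<Longrightarrow> qq j < qq i"
proof -
  assume ji: "j < i" and e: "tt j = tt i"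
  define d where "d = tt i"
  have j: "j = Q * d + j mod Q" using e unfolding d_def tt_def by (metis div_mult_mod_eq mult.commute)
  have ii: "i = Q * d + i mod Q" unfolding d_def tt_def by (metis div_mult_mod_eq mult.commute)
  have "Q * d + j mod Q < Q * d + i mod Q" using ji j ii by linarith
  then show ?thesis unfolding qq_def by simp
qed

lemma Pre_eq:
  assumes len: "length ps = tt i" and E: "qq i \<le> Mx k N"
  shows "Pre k i (W, ps @ N # fut) = Pre0 k (tt i) i (W, ps)"
  unfolding Pre_def Pre0_def
proof (rule map_cong[OF refl])
  fix j assume "j \<in> set [0..<i]"
  then have ji: "j < i" by simp
  show "Z k j (W, ps @ N # fut) = Z0 k (tt i) j (W, ps)"
  proof (cases "tt j < tt i")
    case True
    then show ?thesis unfolding Z_def Z0_def using len by (simp add: nth_append)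
  next
    case False
    then have e: "tt j = tt i" using tt_le[OF ji] by simp
    then have "qq j \<le> Mx k N" using qq_lt[OF ji e] E by simp
    then show ?thesis unfolding Z_def Z0_def using len e by (simp add: nth_append)
  qed
qed

lemma pk_sum: "pk k q = (\<Sum>N\<in>{N\<in>SSt. q \<le> Mx k N}. pmf P N)"
proof -
  have fin: "finite {N\<in>SSt. q \<le> Mx k N}" using finSS by simp
  have "pk k q = measure_pmf.prob P ({N. q \<le> Mx k N} \<inter> set_pmf P)"
    unfolding pk_def by (simp add: measure_Int_set_pmf)
  also have "{N. q \<le> Mx k N} \<inter> set_pmf P = {N\<in>SSt. q \<le> Mx k N} \<inter> set_pmf P"
    using supp unfolding SSt_def by auto
  also have "measure_pmf.prob P \<dots> = measure_pmf.prob P {N\<in>SSt. q \<le> Mx k N}"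
    by (simp add: measure_Int_set_pmf)
  also have "\<dots> = (\<Sum>N\<in>{N\<in>SSt. q \<le> Mx k N}. pmf P N)"
    by (rule measure_measure_pmf_finite[OF fin])
  finally show ?thesis .
qed

lemma prl_split: "t < length ns \<Longrightarrow> prl ns = prl (take t ns) * (pmf P (ns ! t) * prl (drop (Suc t) ns))"
proof -
  assume t: "t < length ns"
  have "ns = take t ns @ ns ! t # drop (Suc t) ns" using t by (simp add: id_take_nth_drop)
  then have "prl ns = prl (take t ns @ ns ! t # drop (Suc t) ns)" by simp
  also have "\<dots> = prl (take t ns) * (pmf P (ns ! t) * prl (drop (Suc t) ns))"
    unfolding prl_def by simp
  finally show ?thesis .
qed

lemma factor_step:
  assumes i: "i < n * Q"
  shows "cent Omg wtg (Z k i) (\<lambda>om. (Pre k i om, snd om, V m om)) = pk k (qq i) * hh k i (V m)"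
proof -
  define t where "t = tt i"
  have tn: "t < n" using i Q1 unfolding t_def tt_def by (simp add: div_less_iff_less_mult mult.commute)
  define B where "B = SSt \<times> LSt (n - Suc t)"
  define beta where "beta b = pmf P (fst b) * prl (snd b)" for b :: "(nat \<Rightarrow> nat) \<times> (nat \<Rightarrow> nat) list"
  define h where "h om = ((fst om, take t (snd om)), (snd om ! t, drop (Suc t) (snd om)))"
    for om :: "(nat \<Rightarrow> nat) \<times> (nat \<Rightarrow> nat) list"
  define g where "g p = (fst (fst p), snd (fst p) @ fst (snd p) # snd (snd p))"
    for p :: "((nat \<Rightarrow> nat) \<times> (nat \<Rightarrow> nat) list) \<times> (nat \<Rightarrow> nat) \<times> (nat \<Rightarrow> nat) list"
  have bij: "bij_betw h Omg (Atg t \<times> B)"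
  proof (rule bij_betw_byWitness[where f'=g])
    show "\<forall>a\<in>Omg. g (h a) = a" unfolding g_def h_def Omg_def LSt_def using tn
      by (auto simp: id_take_nth_drop[symmetric])
    show "\<forall>a'\<in>Atg t \<times> B. h (g a') = a'" unfolding g_def h_def Atg_def B_def LSt_def by auto
    show "h ` Omg \<subseteq> Atg t \<times> B" unfolding h_def Omg_def Atg_def B_def LSt_def using tn
      by (auto dest!: in_set_takeD in_set_dropD simp: subset_iff)
    show "g ` (Atg t \<times> B) \<subseteq> Omg" unfolding g_def Omg_def Atg_def B_def LSt_def using tn by auto
  qed
  have gh: "g (h om) = om" if "om \<in> Omg" for om using that tn unfolding g_def h_def Omg_def LSt_def
    by (auto simp: id_take_nth_drop[symmetric])
  have wh: "wtg om = (\<lambda>(a, b). alpha a * beta b) (h om)" if "om \<in> Omg" for om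
    using that tn prl_split[of t "snd om"] unfolding wtg_def alpha_def beta_def h_def Omg_def LSt_def
    by (auto simp: field_simps)
  have step1: "cent Omg wtg (Z k i) (\<lambda>om. (Pre k i om, snd om, V m om)) =
      cent (Atg t \<times> B) (\<lambda>(a, b). alpha a * beta b) (Z k i \<circ> g) ((\<lambda>om. (Pre k i om, snd om, V m om)) \<circ> g)"
    by (rule cent_bij[OF bij]) (auto simp: gh wh dstr.finA[OF dstr_Om])
  have step2: "cent (Atg t \<times> B) (\<lambda>(a, b). alpha a * beta b) (Z k i \<circ> g) ((\<lambda>om. (Pre k i om, snd om, V m om)) \<circ> g)
      = (\<Sum>b\<in>{b\<in>B. qq i \<le> Mx k (fst b)}. beta b) *
        cent (Atg t) alpha (\<lambda>a. enc t (fst a) (snd a) (qq i)) (\<lambda>a. (Pre0 k t i a, snd a, V m a))"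
  proof (rule factor[OF dstr_At])
    show "finite B" unfolding B_def using finSS finLS by simp
    show "0 \<le> beta b" for b unfolding beta_def using pr_nn by simp
    fix a b a' b' assume a: "a \<in> Atg t" and b: "b \<in> B" and a': "a' \<in> Atg t"
    have la: "length (snd a) = t" and la': "length (snd a') = t" using a a' unfolding Atg_def LSt_def by auto
    show "(Z k i \<circ> g) (a, b) = (if qq i \<le> Mx k (fst b) then Some (enc t (fst a) (snd a) (qq i)) else None)"
      unfolding Z_def g_def using la t_def by (simp add: nth_append)
    {
      assume b': "b' \<in> B"
      assume "((\<lambda>om. (Pre k i om, snd om, V m om)) \<circ> g) (a, b) = ((\<lambda>om. (Pre k i om, snd om, V m om)) \<circ> g) (a', b')"
      then have "snd a @ fst b # snd b = snd a' @ fst b' # snd b'" unfolding g_def by simp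
      then show "b = b'" using la la' by (simp add: prod_eq_iff)
    }
    assume E: "qq i \<le> Mx k (fst b)"
    have p1: "Pre k i (g (a, b)) = Pre0 k t i a" unfolding g_def t_def
      using Pre_eq[of "snd a" i k "fst b" "fst a" "snd b"] la E t_def by simp
    have p2: "Pre k i (g (a', b)) = Pre0 k t i a'" unfolding g_def t_def
      using Pre_eq[of "snd a'" i k "fst b" "fst a'" "snd b"] la' E t_def by simp
    show "(((\<lambda>om. (Pre k i om, snd om, V m om)) \<circ> g) (a, b) = ((\<lambda>om. (Pre k i om, snd om, V m om)) \<circ> g) (a', b))
        = ((Pre0 k t i a, snd a, V m a) = (Pre0 k t i a', snd a', V m a'))"
      using p1 p2 unfolding g_def V_def by auto
  qed
  have "(\<Sum>b\<in>{b\<in>B. qq i \<le> Mx k (fst b)}. beta b) = (\<Sum>N\<in>{N\<in>SSt. qq i \<le> Mx k N}. \<Sum>fut\<in>LSt (n - Suc t). pmf P N * prl fut)"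
  proof -
    have "{b\<in>B. qq i \<le> Mx k (fst b)} = {N\<in>SSt. qq i \<le> Mx k N} \<times> LSt (n - Suc t)" unfolding B_def by auto
    then show ?thesis unfolding beta_def by (simp add: sum.cartesian_product case_prod_unfold)
  qed
  also have "\<dots> = pk k (qq i)" unfolding pk_sum using sum_pr[of "n - Suc t"]
    by (simp add: sum_distrib_left[symmetric])
  finally show ?thesis using step1 step2 unfolding hh_def t_def by simp
qed


lemma Mx_mono: "Suc k < K \<Longrightarrow> Mx (Suc k) N \<le> Mx k N"
  unfolding Mx_def by (rule Max_mono) auto

lemma Mx_ge: "k < K \<Longrightarrow> N (\<pi> k) \<le> Mx k N"
  unfolding Mx_def by (rule Max_ge) auto

lemma V_Suc: "V (Suc m) om = tl (V m om)"
  unfolding V_def by (simp add: map_tl[symmetric] tl_upt)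

lemma At_ne: "Atg t \<noteq> {}"
proof -
  have "replicate t (\<lambda>_. 0) \<in> LSt t" unfolding LSt_def SSt_def using zero_state by auto
  then show ?thesis unfolding Atg_def using MS_ne by auto
qed

lemma hh_mono_U:
  assumes "\<And>a a'. a \<in> Atg (tt i) \<Longrightarrow> a' \<in> Atg (tt i) \<Longrightarrow> U1 a = U1 a' \<Longrightarrow> U2 a = U2 a'"
  shows "hh k i U1 \<le> hh k i U2"
proof -
  interpret dstr "Atg (tt i)" alpha by (rule dstr_At)
  show ?thesis unfolding hh_def by (rule cent_mono) (metis assms prod.inject)
qed

lemma hh_mono_V: "hh k i (V m) \<le> hh k i (V (Suc m))"
  by (rule hh_mono_U) (simp add: V_Suc)

lemma Pre0_nth: "j < i \<Longrightarrow> Pre0 k t i a ! j = Z0 k t j a"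
  unfolding Pre0_def by simp

lemma hh_mono_k:
  assumes k: "Suc k < K"
  shows "hh k i U \<le> hh (Suc k) i U"
proof -
  interpret dstr "Atg (tt i)" alpha by (rule dstr_At)
  show ?thesis unfolding hh_def
  proof (rule cent_mono)
    fix a a' assume eq: "(Pre0 k (tt i) i a, snd a, U a) = (Pre0 k (tt i) i a', snd a', U a')"
    have "Pre0 (Suc k) (tt i) i a = Pre0 (Suc k) (tt i) i a'"
    proof (rule nth_equalityI)
      show "length (Pre0 (Suc k) (tt i) i a) = length (Pre0 (Suc k) (tt i) i a')" unfolding Pre0_def by simp
      fix j assume "j < length (Pre0 (Suc k) (tt i) i a)"
      then have ji: "j < i" unfolding Pre0_def by simp
      have "Pre0 k (tt i) i a = Pre0 k (tt i) i a'" using eq by simp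
      then have zk: "Z0 k (tt i) j a = Z0 k (tt i) j a'" using Pre0_nth[OF ji, of k "tt i"] by metis
      have sn: "snd a = snd a'" using eq by simp
      show "Pre0 (Suc k) (tt i) i a ! j = Pre0 (Suc k) (tt i) i a' ! j"
        unfolding Pre0_nth[OF ji]
      proof (cases "tt j < tt i \<and> \<not> qq j \<le> Mx (Suc k) (snd a ! tt j)")
        case True then show "Z0 (Suc k) (tt i) j a = Z0 (Suc k) (tt i) j a'" unfolding Z0_def using sn by simp
      next
        case False
        then have "\<not> (tt j < tt i \<and> \<not> qq j \<le> Mx k (snd a ! tt j))"
          using Mx_mono[OF k, of "snd a ! tt j"] by auto
        then show "Z0 (Suc k) (tt i) j a = Z0 (Suc k) (tt i) j a'"
          using False zk sn unfolding Z0_def by (auto split: if_splits)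
      qed
    qed
    then show "(Pre0 (Suc k) (tt i) i a, snd a, U a) = (Pre0 (Suc k) (tt i) i a', snd a', U a')"
      using eq by simp
  qed
qed

lemma hh_nonneg: "0 \<le> hh k i U"
proof -
  interpret dstr "Atg (tt i)" alpha by (rule dstr_At)
  show ?thesis unfolding hh_def by (rule cent_nonneg)
qed

lemma hh_le: "hh k i U \<le> ln CARD('f)"
proof -
  interpret dstr "Atg (tt i)" alpha by (rule dstr_At)
  let ?f = "\<lambda>a. enc (tt i) (fst a) (snd a) (qq i)"
  have "hh k i U \<le> ent (Atg (tt i)) alpha ?f" unfolding hh_def by (rule cent_le_ent)
  also have "\<dots> \<le> ln (card (?f ` Atg (tt i)))" by (rule ent_le_card)
  also have "\<dots> \<le> ln CARD('f)"
  proof -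
    have "0 < card (?f ` Atg (tt i))" using At_ne finA by (simp add: card_gt_0_iff)
    moreover have "card (?f ` Atg (tt i)) \<le> CARD('f)" by (rule card_mono) auto
    ultimately show ?thesis by simp
  qed
  finally show ?thesis .
qed

end

lemma telescope:
  fixes a g c :: "nat \<Rightarrow> real"
  assumes "0 \<le> g 0" and ga: "\<And>k. k < K \<Longrightarrow> g k \<le> a k" and ag: "\<And>k. Suc k < K \<Longrightarrow> a k \<le> g (Suc k)"
    and aG: "\<And>k. k < K \<Longrightarrow> a k \<le> G" and cnn: "\<And>k. k < K \<Longrightarrow> 0 \<le> c k" and K: "1 \<le> K"
  shows "(\<Sum>k<K. c k * (a k - g k)) \<le> Max (c ` {..<K}) * G"
proof -
  define Mc where "Mc = Max (c ` {..<K})"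
  have Mc: "c k \<le> Mc" if "k < K" for k unfolding Mc_def using that by (intro Max_ge) auto
  have Mc0: "0 \<le> Mc" using Mc[of 0] cnn[of 0] K by simp
  have tel: "(\<Sum>k<Suc m. a k - g k) \<le> a m - g 0" if "m < K" for m
    using that
  proof (induction m)
    case 0 then show ?case by simp
  next
    case (Suc m)
    then have "(\<Sum>k<Suc m. a k - g k) \<le> a m - g 0" by simp
    moreover have "a m \<le> g (Suc m)" using ag Suc by simp
    ultimately show ?case by simp
  qed
  have "(\<Sum>k<K. c k * (a k - g k)) \<le> (\<Sum>k<K. Mc * (a k - g k))"
    using ga Mc cnn by (intro sum_mono mult_right_mono) auto
  also have "\<dots> = Mc * (\<Sum>k<K. a k - g k)" by (simp add: sum_distrib_left)
  also have "(\<Sum>k<K. a k - g k) \<le> G"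
  proof -
    obtain m where m: "K = Suc m" using K by (cases K) auto
    have "(\<Sum>k<K. a k - g k) \<le> a m - g 0" using tel[of m] m by simp
    also have "\<dots> \<le> G" using aG[of m] m assms(1) by simp
    finally show ?thesis .
  qed
  then have "Mc * (\<Sum>k<K. a k - g k) \<le> Mc * G" using Mc0 by (intro mult_left_mono) auto
  finally show ?thesis unfolding Mc_def .
qed

context chan
begin


definition "Obs k = Pre k (n * Q)"
definition "Ik k = cent Omg wtg (Obs k) (\<lambda>om. (snd om, V (Suc k) om)) - cent Omg wtg (Obs k) (\<lambda>om. (snd om, V k om))"

lemma Obs_hh: "cent Omg wtg (Obs k) (\<lambda>om. (snd om, V m om)) = (\<Sum>i<n * Q. pk k (qq i) * hh k i (V m))"
  unfolding Obs_def chain by (intro sum.cong refl) (simp add: factor_step)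

lemma Ik_hh: "Ik k = (\<Sum>i<n * Q. pk k (qq i) * (hh k i (V (Suc k)) - hh k i (V k)))"
  unfolding Ik_def Obs_hh by (simp add: sum_subtractf right_diff_distrib)

lemma sum_qq: "(\<Sum>i<m * Q. f (qq i)) = real m * (\<Sum>q=1..Q. f q)" for f :: "nat \<Rightarrow> real"
proof (induction m)
  case 0 then show ?case by simp
next
  case (Suc m)
  have un: "{..<Suc m * Q} = {..<m * Q} \<union> (\<lambda>r. m * Q + r) ` {..<Q}"
  proof (intro set_eqI iffI)
    fix x assume x: "x \<in> {..<Suc m * Q}"
    show "x \<in> {..<m * Q} \<union> (\<lambda>r. m * Q + r) ` {..<Q}"
    proof (cases "x < m * Q")
      case False
      then have "x = m * Q + (x - m * Q)" "x - m * Q < Q" using x by auto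
      then show ?thesis by blast
    qed simp
  qed auto
  have "(\<Sum>i<Suc m * Q. f (qq i)) = (\<Sum>i<m * Q. f (qq i)) + (\<Sum>i\<in>(\<lambda>r. m * Q + r) ` {..<Q}. f (qq i))"
    unfolding un by (rule sum.union_disjoint) auto
  also have "(\<Sum>i\<in>(\<lambda>r. m * Q + r) ` {..<Q}. f (qq i)) = (\<Sum>r<Q. f (qq (m * Q + r)))"
    by (subst sum.reindex) (auto simp: inj_on_def)
  also have "\<dots> = (\<Sum>r<Q. f (Suc r))"
    by (intro sum.cong refl) (simp add: qq_def)
  also have "\<dots> = (\<Sum>q=1..Q. f q)" by (simp add: sum.atLeast1_atMost_eq)
  finally show ?case using Suc by (simp add: algebra_simps)
qed

lemma weighted_Ik:
  assumes om: "\<And>k. k < K \<Longrightarrow> 0 \<le> \<omega> (\<pi> k)"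
  shows "(\<Sum>k<K. \<omega> (\<pi> k) * Ik k) \<le>
     real n * ln CARD('f) * (\<Sum>q=1..Q. Max ((\<lambda>k. \<omega> (\<pi> k) * pk k q) ` {..<K}))"
proof -
  have "(\<Sum>k<K. \<omega> (\<pi> k) * Ik k) =
      (\<Sum>i<n * Q. \<Sum>k<K. (\<omega> (\<pi> k) * pk k (qq i)) * (hh k i (V (Suc k)) - hh k i (V k)))"
    unfolding Ik_hh by (simp add: sum_distrib_left sum.swap[of _ "{..<K}"] mult.assoc)
  also have "\<dots> \<le> (\<Sum>i<n * Q. Max ((\<lambda>k. \<omega> (\<pi> k) * pk k (qq i)) ` {..<K}) * ln CARD('f))"
  proof (intro sum_mono telescope)
    fix i k
    show "0 \<le> hh 0 i (V 0)" by (rule hh_nonneg)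
    show "hh k i (V k) \<le> hh k i (V (Suc k))" by (rule hh_mono_V)
    show "hh k i (V (Suc k)) \<le> ln CARD('f)" by (rule hh_le)
    assume k: "Suc k < K"
    show "hh k i (V (Suc k)) \<le> hh (Suc k) i (V (Suc k))" by (rule hh_mono_k[OF k])
  next
    fix i k assume "k < K"
    then show "0 \<le> \<omega> (\<pi> k) * pk k (qq i)" using om by (simp add: pk_def)
  qed (use K2 in simp)
  also have "\<dots> = real n * (\<Sum>q=1..Q. Max ((\<lambda>k. \<omega> (\<pi> k) * pk k q) ` {..<K}) * ln CARD('f))"
    by (rule sum_qq)
  also have "\<dots> = real n * ln CARD('f) * (\<Sum>q=1..Q. Max ((\<lambda>k. \<omega> (\<pi> k) * pk k q) ` {..<K}))"
    by (simp add: sum_distrib_right[symmetric])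
  finally show ?thesis .
qed


definition "Wk k om = fst om (\<pi> k)"

lemma V_Cons: "k < K \<Longrightarrow> V k om = Wk k om # V (Suc k) om"
  unfolding V_def Wk_def by (simp add: upt_conv_Cons)

lemma Omg_ne: "Omg \<noteq> {}"
proof -
  have "replicate n (\<lambda>_. 0) \<in> LSt n" unfolding LSt_def SSt_def using zero_state by auto
  then show ?thesis unfolding Omg_def using MS_ne by auto
qed

lemma cent_V_step:
  assumes k: "k < K"
  shows "cent Omg wtg (Wk k) (\<lambda>om. (snd om, V (Suc k) om)) = cent Omg wtg (V k) snd - cent Omg wtg (V (Suc k)) snd"
proof -
  interpret dstr Omg wtg by (rule dstr_Om)
  have e1: "ent Omg wtg (\<lambda>om. (V k om, snd om)) = ent Omg wtg (\<lambda>om. (Wk k om, snd om, V (Suc k) om))"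
    by (rule ent_cong) (auto simp: V_Cons[OF k])
  have e2: "ent Omg wtg (\<lambda>om. (snd om, V (Suc k) om)) = ent Omg wtg (\<lambda>om. (V (Suc k) om, snd om))"
    by (rule ent_cong) auto
  show ?thesis unfolding cent_def e1 e2 by simp
qed

lemma cent_VK: "cent Omg wtg (V K) snd = 0"
proof -
  interpret dstr Omg wtg by (rule dstr_Om)
  show ?thesis by (rule cent_zero) (simp add: V_def)
qed

lemma V0_inj:
  assumes om: "om \<in> Omg" "om' \<in> Omg" and eq: "V 0 om = V 0 om'"
  shows "fst om = fst om'"
proof
  fix k
  show "fst om k = fst om' k"
  proof (cases "k < K")
    case True
    have "k \<in> \<pi> ` {..<K}" using permutes_image[OF perm] True by (simp only: lessThan_iff)
    then obtain j where j: "j < K" "k = \<pi> j" by blast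
    have "map (\<lambda>j. fst om (\<pi> j)) [0..<K] = map (\<lambda>j. fst om' (\<pi> j)) [0..<K]" using eq unfolding V_def .
    then have "\<forall>x\<in>set [0..<K]. fst om (\<pi> x) = fst om' (\<pi> x)" by (simp only: map_eq_conv)
    then show ?thesis using j by simp
  next
    case False
    have "fst om \<in> MSg" "fst om' \<in> MSg" using om unfolding Omg_def by auto
    then have "fst om \<in> PiE {..<K} (\<lambda>k. {..<mm k})" "fst om' \<in> PiE {..<K} (\<lambda>k. {..<mm k})"
      unfolding MSg_def by auto
    then show ?thesis using PiE_arb[of "fst om" "{..<K}" _ k] PiE_arb[of "fst om'" "{..<K}" _ k] False
      by simp
  qed
qed

lemma cent_V0: "cent Omg wtg (V 0) snd = ln (card MSg)"
proof -
  interpret dstr Omg wtg by (rule dstr_Om)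
  have e1: "ent Omg wtg (\<lambda>om. (V 0 om, snd om)) = ent Omg wtg (\<lambda>om. om)"
    by (rule ent_cong) (auto simp: prod_eq_iff dest: V0_inj)
  have pid: "pd Omg wtg (\<lambda>om. om) om = wtg om" if "om \<in> Omg" for om
  proof -
    have "{a' \<in> Omg. a' = om} = {om}" using that by auto
    then show ?thesis unfolding pd_def by simp
  qed
  have psnd: "pd Omg wtg snd om = prl (snd om)" if "om \<in> Omg" for om
  proof -
    have es: "{a' \<in> Omg. snd a' = snd om} = (\<lambda>W. (W, snd om)) ` MSg" using that unfolding Omg_def by auto
    have "pd Omg wtg snd om = (\<Sum>W\<in>MSg. prl (snd om) / card MSg)" unfolding pd_def wtg_def es
      by (subst sum.reindex) (auto simp: inj_on_def)
    then show ?thesis using cardMS by simp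
  qed
  have "ent Omg wtg (\<lambda>om. om) - ent Omg wtg snd = (\<Sum>om\<in>Omg. wtg om * ln (card MSg))"
  proof -
    have "ent Omg wtg (\<lambda>om. om) - ent Omg wtg snd = (\<Sum>om\<in>Omg. wtg om * ln (prl (snd om)) - wtg om * ln (wtg om))"
      unfolding ent_def using pid psnd by (simp add: sum_subtractf)
    also have "\<dots> = (\<Sum>om\<in>Omg. wtg om * ln (card MSg))"
    proof (intro sum.cong refl)
      fix om assume om: "om \<in> Omg"
      show "wtg om * ln (prl (snd om)) - wtg om * ln (wtg om) = wtg om * ln (card MSg)"
      proof (cases "prl (snd om) = 0")
        case True then show ?thesis unfolding wtg_def by simp
      next
        case False
        then have pp: "0 < prl (snd om)" using pr_nn[of "snd om"] by simp
        have "ln (wtg om) = ln (prl (snd om)) - ln (card MSg)" unfolding wtg_def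
          using pp cardMS by (simp add: ln_divide_pos)
        then show ?thesis by (simp only:) (simp add: algebra_simps)
      qed
    qed
    finally show ?thesis .
  qed
  also have "\<dots> = ln (card MSg)" using wsum by (simp add: sum_distrib_right[symmetric])
  finally show ?thesis unfolding cent_def e1 .
qed

lemma ln_MS: "ln (card MSg) = (\<Sum>k<K. ln (mm (\<pi> k)))"
proof -
  have "card MSg = (\<Prod>k<K. mm k)" unfolding MSg_def by (simp add: card_PiE)
  moreover have "\<And>k. k \<in> {..<K} \<Longrightarrow> real (mm k) \<noteq> 0" using mm1
    by (metis not_one_le_zero of_nat_eq_0_iff)
  ultimately have "ln (card MSg) = (\<Sum>k<K. ln (mm k))"
    using ln_prod[of "{..<K}" "\<lambda>k. real (mm k)"] by simp
  also have "\<dots> = (\<Sum>k<K. ln (mm (\<pi> k)))"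
    using sum.reindex_bij_betw[OF permutes_imp_bij[OF perm], of "\<lambda>k. ln (mm k)"] by simp
  finally show ?thesis .
qed

lemma cent_Wk_le: "k < K \<Longrightarrow> cent Omg wtg (Wk k) C \<le> ln (mm (\<pi> k))"
proof -
  assume k: "k < K"
  interpret dstr Omg wtg by (rule dstr_Om)
  have "cent Omg wtg (Wk k) C \<le> ent Omg wtg (Wk k)" by (rule cent_le_ent)
  also have "\<dots> \<le> ln (card (Wk k ` Omg))" by (rule ent_le_card)
  also have "\<dots> \<le> ln (mm (\<pi> k))"
  proof -
    have pk: "\<pi> k \<in> {..<K}" using permutes_in_image[OF perm, of k] k by simp
    have sub: "Wk k ` Omg \<subseteq> {..<mm (\<pi> k)}"
    proof
      fix x assume "x \<in> Wk k ` Omg"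
      then obtain om where om: "om \<in> Omg" "x = fst om (\<pi> k)" unfolding Wk_def by blast
      then have "fst om \<in> MSg" unfolding Omg_def by (simp add: mem_Times_iff)
      then have "fst om \<in> PiE {..<K} (\<lambda>k. {..<mm k})" unfolding MSg_def .
      from PiE_mem[OF this pk] show "x \<in> {..<mm (\<pi> k)}" using om by simp
    qed
    have "card (Wk k ` Omg) \<le> mm (\<pi> k)" using card_mono[OF _ sub] by simp
    moreover have "0 < card (Wk k ` Omg)" using Omg_ne finA by (simp add: card_gt_0_iff)
    ultimately show ?thesis by simp
  qed
  finally show ?thesis .
qed

lemma cent_Wk_eq:
  assumes k: "k < K"
  shows "cent Omg wtg (Wk k) (\<lambda>om. (snd om, V (Suc k) om)) = ln (mm (\<pi> k))"
proof (rule ccontr)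
  define a where "a j = cent Omg wtg (Wk j) (\<lambda>om. (snd om, V (Suc j) om))" for j
  assume ne: "cent Omg wtg (Wk k) (\<lambda>om. (snd om, V (Suc k) om)) \<noteq> ln (mm (\<pi> k))"
  have le: "a j \<le> ln (mm (\<pi> j))" if "j \<in> {..<K}" for j unfolding a_def using that cent_Wk_le by simp
  have "a k < ln (mm (\<pi> k))" using le[of k] k ne unfolding a_def by simp
  then have "sum a {..<K} < (\<Sum>j<K. ln (mm (\<pi> j)))"
    using k le by (intro sum_strict_mono_ex1) auto
  moreover have "sum a {..<K} = cent Omg wtg (V 0) snd - cent Omg wtg (V K) snd"
    unfolding a_def using cent_V_step
    by (simp add: sum_lessThan_telescope'[of "\<lambda>j. cent Omg wtg (V j) snd"])
  ultimately show False using cent_V0 cent_VK ln_MS by simp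
qed


lemma Ik_W:
  assumes k: "k < K"
  shows "Ik k = cent Omg wtg (Wk k) (\<lambda>om. (snd om, V (Suc k) om))
       - cent Omg wtg (Wk k) (\<lambda>om. (Obs k om, snd om, V (Suc k) om))"
proof -
  interpret dstr Omg wtg by (rule dstr_Om)
  have e1: "ent Omg wtg (\<lambda>om. (Obs k om, snd om, V k om)) = ent Omg wtg (\<lambda>om. (Wk k om, Obs k om, snd om, V (Suc k) om))"
    by (rule ent_cong) (auto simp: V_Cons[OF k])
  have e2: "ent Omg wtg (\<lambda>om. (snd om, V k om)) = ent Omg wtg (\<lambda>om. (Wk k om, snd om, V (Suc k) om))"
    by (rule ent_cong) (auto simp: V_Cons[OF k])
  show ?thesis unfolding Ik_def cent_def e1 e2 by simp
qed

lemma Obs_nth: "i < n * Q \<Longrightarrow> Obs k om ! i = Z k i om"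
  unfolding Obs_def Pre_def by simp

lemma user_out_dep:
  assumes om: "om \<in> Omg" and k: "k < K" and eqO: "Obs k om = Obs k om'" and eqS: "snd om = snd om'"
  shows "user_outputs n enc (fst om) (snd om) (\<pi> k) = user_outputs n enc (fst om') (snd om') (\<pi> k)"
  unfolding user_outputs_def eqS[symmetric]
proof (rule map_cong[OF refl])
  fix t assume "t \<in> set [0..<n]"
  then have t: "t < n" by simp
  define N where "N = snd om ! t"
  have lenn: "length (snd om) = n" and sset: "set (snd om) \<subseteq> SSt" using om unfolding Omg_def LSt_def by auto
  have NS: "N \<in> SSt" using sset t lenn unfolding N_def by (auto simp: set_conv_nth)
  have pk: "\<pi> k < K" using permutes_in_image[OF perm, of k] k by simp
  have NQ: "N (\<pi> k) \<le> Q" using NS pk unfolding SSt_def state_set_def by auto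
  have NM: "N (\<pi> k) \<le> Mx k N" by (rule Mx_ge[OF k])
  have xeq: "enc t (fst om) (take t (snd om)) q = enc t (fst om') (take t (snd om)) q"
    if q1: "1 \<le> q" and qN: "q \<le> N (\<pi> k)" for q
  proof -
    define i where "i = t * Q + (q - 1)"
    have qQ: "q - 1 < Q" using q1 qN NQ by simp
    have tti: "tt i = t" unfolding tt_def i_def using qQ by simp
    have m: "(q - 1 + t * Q) mod Q = q - 1" using qQ by simp
    have qqi: "qq i = q" unfolding qq_def i_def using m q1 by (simp add: add.commute)
    have "i < t * Q + Q" unfolding i_def using qQ by simp
    also have "t * Q + Q \<le> n * Q" using t by (metis Suc_leI add.commute mult_Suc mult_le_mono1)
    finally have iQ: "i < n * Q" .
    have z1: "Z k i om = Some (enc t (fst om) (take t (snd om)) q)"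
      unfolding Z_def tti qqi using qN NM N_def by simp
    have z2: "Z k i om' = Some (enc t (fst om') (take t (snd om)) q)"
      unfolding Z_def tti qqi using qN NM N_def eqS by simp
    have "Z k i om = Z k i om'" using eqO Obs_nth[OF iQ, of k] by metis
    then show ?thesis using z1 z2 by simp
  qed
  show "lpe_output (enc t (fst om) (take t (snd om))) (snd om ! t) (\<pi> k) =
        lpe_output (enc t (fst om') (take t (snd om))) (snd om ! t) (\<pi> k)"
    unfolding lpe_output_def N_def[symmetric] using xeq by (auto intro!: map_cong)
qed

lemma per_k:
  fixes dec :: "nat \<Rightarrow> 'f list option list \<Rightarrow> (nat \<Rightarrow> nat) list \<Rightarrow> nat"
  assumes k: "k < K"
  shows "ln (mm (\<pi> k)) - (3 + 2 * sum wtg {om\<in>Omg. Wk k om \<noteq> dec (\<pi> k) (user_outputs n enc (fst om) (snd om) (\<pi> k)) (snd om)} * ln (mm (\<pi> k)))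
     \<le> Ik k"
proof -
  interpret dstr Omg wtg by (rule dstr_Om)
  define Wh where "Wh om = dec (\<pi> k) (user_outputs n enc (fst om) (snd om) (\<pi> k)) (snd om)" for om
  have c1: "cent Omg wtg (Wk k) (\<lambda>om. (Obs k om, snd om, V (Suc k) om)) \<le> cent Omg wtg (Wk k) Wh"
  proof (rule cent_mono)
    fix om om' assume om: "om \<in> Omg" "om' \<in> Omg"
      and eq: "(Obs k om, snd om, V (Suc k) om) = (Obs k om', snd om', V (Suc k) om')"
    then show "Wh om = Wh om'" unfolding Wh_def using user_out_dep[OF om(1) k] by simp
  qed
  have pk: "\<pi> k \<in> {..<K}" using permutes_in_image[OF perm, of k] k by simp
  have rng: "Wk k om < mm (\<pi> k)" if "om \<in> Omg" for om
  proof -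
    have "fst om \<in> MSg" using that unfolding Omg_def by (simp add: mem_Times_iff)
    then have "fst om \<in> PiE {..<K} (\<lambda>k. {..<mm k})" unfolding MSg_def .
    from PiE_mem[OF this pk] show ?thesis unfolding Wk_def by simp
  qed
  have c2: "cent Omg wtg (Wk k) Wh \<le> 3 + 2 * sum wtg {om\<in>Omg. Wk k om \<noteq> Wh om} * ln (mm (\<pi> k))"
    by (rule fano[OF rng mm1])
  show ?thesis using Ik_W[OF k] cent_Wk_eq[OF k] c1 c2 unfolding Wh_def by linarith
qed

lemma weighted_bound:
  fixes dec :: "nat \<Rightarrow> 'f list option list \<Rightarrow> (nat \<Rightarrow> nat) list \<Rightarrow> nat"
  assumes om: "\<And>k. k < K \<Longrightarrow> 0 \<le> \<omega> (\<pi> k)"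
  shows "(\<Sum>k<K. \<omega> (\<pi> k) * (ln (mm (\<pi> k)) - (3 + 2 * sum wtg {om\<in>Omg. Wk k om \<noteq> dec (\<pi> k) (user_outputs n enc (fst om) (snd om) (\<pi> k)) (snd om)} * ln (mm (\<pi> k)))))
    \<le> real n * ln CARD('f) * (\<Sum>q=1..Q. Max ((\<lambda>k. \<omega> (\<pi> k) * pk k q) ` {..<K}))"
proof -
  have "(\<Sum>k<K. \<omega> (\<pi> k) * (ln (mm (\<pi> k)) - (3 + 2 * sum wtg {om\<in>Omg. Wk k om \<noteq> dec (\<pi> k) (user_outputs n enc (fst om) (snd om) (\<pi> k)) (snd om)} * ln (mm (\<pi> k)))))
      \<le> (\<Sum>k<K. \<omega> (\<pi> k) * Ik k)"
    using per_k om by (intro sum_mono mult_left_mono) auto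
  also have "\<dots> \<le> real n * ln CARD('f) * (\<Sum>q=1..Q. Max ((\<lambda>k. \<omega> (\<pi> k) * pk k q) ` {..<K}))"
    by (rule weighted_Ik) (rule om)
  finally show ?thesis .
qed


lemma weighted_bound2:
  fixes dec :: "nat \<Rightarrow> 'f list option list \<Rightarrow> (nat \<Rightarrow> nat) list \<Rightarrow> nat"
  assumes om: "\<And>k. k < K \<Longrightarrow> 0 \<le> \<omega> (\<pi> k)" and e: "e \<le> 1/2"
    and pe: "\<And>k. k < K \<Longrightarrow> sum wtg {om\<in>Omg. Wk k om \<noteq> dec (\<pi> k) (user_outputs n enc (fst om) (snd om) (\<pi> k)) (snd om)} \<le> e"
  shows "(\<Sum>k<K. \<omega> (\<pi> k) * ((1 - 2 * e) * ln (mm (\<pi> k)) - 3))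
    \<le> real n * ln CARD('f) * (\<Sum>q=1..Q. Max ((\<lambda>k. \<omega> (\<pi> k) * pk k q) ` {..<K}))"
proof -
  have "(\<Sum>k<K. \<omega> (\<pi> k) * ((1 - 2 * e) * ln (mm (\<pi> k)) - 3)) \<le>
     (\<Sum>k<K. \<omega> (\<pi> k) * (ln (mm (\<pi> k)) - (3 + 2 * sum wtg {om\<in>Omg. Wk k om \<noteq> dec (\<pi> k) (user_outputs n enc (fst om) (snd om) (\<pi> k)) (snd om)} * ln (mm (\<pi> k)))))"
  proof (intro sum_mono mult_left_mono)
    fix k assume "k \<in> {..<K}"
    then have k: "k < K" by simp
    have l0: "0 \<le> ln (real (mm (\<pi> k)))" using mm1[of "\<pi> k"] by simp
    have "sum wtg {om\<in>Omg. Wk k om \<noteq> dec (\<pi> k) (user_outputs n enc (fst om) (snd om) (\<pi> k)) (snd om)} * ln (mm (\<pi> k))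
        \<le> e * ln (mm (\<pi> k))" using pe[OF k] l0 by (rule mult_right_mono)
    then show "(1 - 2 * e) * ln (mm (\<pi> k)) - 3 \<le>
       ln (mm (\<pi> k)) - (3 + 2 * sum wtg {om\<in>Omg. Wk k om \<noteq> dec (\<pi> k) (user_outputs n enc (fst om) (snd om) (\<pi> k)) (snd om)} * ln (mm (\<pi> k)))"
      by (simp add: algebra_simps)
    show "0 \<le> \<omega> (\<pi> k)" by (rule om[OF k])
  qed
  also have "\<dots> \<le> real n * ln CARD('f) * (\<Sum>q=1..Q. Max ((\<lambda>k. \<omega> (\<pi> k) * pk k q) ` {..<K}))"
    by (rule weighted_bound) (rule om)
  finally show ?thesis .
qed

lemma err_le:
  fixes dec :: "nat \<Rightarrow> 'f list option list \<Rightarrow> (nat \<Rightarrow> nat) list \<Rightarrow> nat"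
  assumes k: "k < K"
  shows "sum wtg {om\<in>Omg. Wk k om \<noteq> dec (\<pi> k) (user_outputs n enc (fst om) (snd om) (\<pi> k)) (snd om)}
    \<le> (\<Sum>om\<in>Omg. wtg om * (if \<exists>k<K. dec k (user_outputs n enc (fst om) (snd om) k) (snd om) \<noteq> fst om k then 1 else 0))"
proof -
  interpret dstr Omg wtg by (rule dstr_Om)
  have pk: "\<pi> k < K" using permutes_in_image[OF perm, of k] k by simp
  have "sum wtg {om\<in>Omg. Wk k om \<noteq> dec (\<pi> k) (user_outputs n enc (fst om) (snd om) (\<pi> k)) (snd om)}
      = (\<Sum>om\<in>Omg. if Wk k om \<noteq> dec (\<pi> k) (user_outputs n enc (fst om) (snd om) (\<pi> k)) (snd om) then wtg om else 0)"
    using finA by (simp add: sum.inter_filter)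
  also have "\<dots> \<le> (\<Sum>om\<in>Omg. wtg om * (if \<exists>k<K. dec k (user_outputs n enc (fst om) (snd om) k) (snd om) \<noteq> fst om k then 1 else 0))"
  proof (intro sum_mono)
    fix om assume "om \<in> Omg"
    then show "(if Wk k om \<noteq> dec (\<pi> k) (user_outputs n enc (fst om) (snd om) (\<pi> k)) (snd om) then wtg om else 0)
       \<le> wtg om * (if \<exists>k<K. dec k (user_outputs n enc (fst om) (snd om) k) (snd om) \<noteq> fst om k then 1 else 0)"
      using wnn pk unfolding Wk_def by auto
  qed
  finally show ?thesis .
qed

lemma prl_nth: "prl ns = (\<Prod>t<length ns. pmf P (ns ! t))"
  unfolding prl_def by (induction ns) (simp_all add: prod.lessThan_Suc_shift del: prod.lessThan_Suc)

end

lemma num_msgs_ge1: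
  assumes "0 \<le> r"
  shows "1 \<le> num_msgs (F :: 'f::{finite,field} itself) n r"
proof -
  have c: "1 \<le> real CARD('f)" by simp
  have "1 \<le> real CARD('f) powr (real n * r)" using c assms by (intro ge_one_powr_ge_zero) auto
  then show ?thesis unfolding num_msgs_def by (simp add: le_nat_floor)
qed

lemma card_field_ge2: "2 \<le> CARD('f::{finite,field})"
proof -
  have "card {0::'f, 1} \<le> CARD('f)" by (rule card_mono) auto
  then show ?thesis by simp
qed

lemma ln_num_msgs:
  assumes "0 \<le> r"
  shows "real n * r * ln CARD('f) - ln 2 \<le> ln (num_msgs (F :: 'f::{finite,field} itself) n r)"
proof -
  define x where "x = real CARD('f) powr (real n * r)"
  have c: "1 \<le> real CARD('f)" by simp
  have x1: "1 \<le> x" unfolding x_def using c assms by (intro ge_one_powr_ge_zero) auto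
  have nm: "real (num_msgs F n r) = of_int \<lfloor>x\<rfloor>" unfolding num_msgs_def x_def using x1
    by (simp add: x_def)
  have "x / 2 \<le> of_int \<lfloor>x\<rfloor>"
  proof (cases "x < 2")
    case True
    have "1 \<le> \<lfloor>x\<rfloor>" using x1 by (simp add: le_floor_iff)
    then show ?thesis using True by linarith
  next
    case False
    then show ?thesis using of_int_floor_le[of x] real_of_int_floor_gt_diff_one[of x] by linarith
  qed
  then have "ln (x / 2) \<le> ln (num_msgs F n r)" unfolding nm using x1 by (subst ln_le_cancel_iff) auto
  moreover have "ln (x / 2) = real n * r * ln CARD('f) - ln 2" unfolding x_def using x1 x_def
    by (simp add: ln_divide_pos)
  ultimately show ?thesis by simp
qed




theorem theorem1:
  fixes F :: "'f::{finite,field} itself"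
    and K Q :: nat and P :: "(nat \<Rightarrow> nat) pmf"
    and R \<omega> :: "nat \<Rightarrow> real" and \<pi> :: "nat \<Rightarrow> nat"
  assumes "K \<ge> 2" and "Q \<ge> 1"
    and "set_pmf P \<subseteq> state_set K Q"
    and "achievable F K Q P R"
    and "\<forall>k<K. 0 \<le> \<omega> k"
    and "\<pi> permutes {..<K}"
  shows "(\<Sum>k<K. \<omega> k * R k) \<le>
    (\<Sum>q=1..Q. Max ((\<lambda>k. \<omega> (\<pi> k) *
        measure_pmf.prob P {N. Max ((\<lambda>j. N (\<pi> j)) ` {k..<K}) \<ge> q}) ` {..<K}))"
proof -
  note K2 = assms(1) and Q1 = assms(2) and supp = assms(3) and omg = assms(5) and perm = assms(6)
  obtain enc dec where Rnn: "\<forall>k<K. 0 \<le> R k"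
    and lim: "(\<lambda>n. error_prob F K Q P n R (enc n) (dec n)) \<longlonglongrightarrow> 0"
    using assms(4) unfolding achievable_def by blast
  define e where "e n = error_prob F K Q P n R (enc n) (dec n)" for n
  define mmn where "mmn n k = (if k < K then num_msgs F n (R k) else 1)" for n k
  define RHS where "RHS = (\<Sum>q=1..Q. Max ((\<lambda>k. \<omega> (\<pi> k) *
        measure_pmf.prob P {N. Max ((\<lambda>j. N (\<pi> j)) ` {k..<K}) \<ge> q}) ` {..<K}))"
  define S where "S = (\<Sum>k<K. \<omega> (\<pi> k) * R (\<pi> k))"
  define c where "c = (ln 2 + 3) * (\<Sum>k<K. \<omega> (\<pi> k))"
  define L where "L = ln (real CARD('f))"
  have L: "0 < L" unfolding L_def using card_field_ge2[where 'f='f] by simp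
  have piK: "\<pi> k < K" if "k < K" for k using permutes_in_image[OF perm, of k] that by simp
  have omp: "0 \<le> \<omega> (\<pi> k)" if "k < K" for k using omg piK[OF that] by simp
  have key: "(1 - 2 * e n) * S - c / (real n * L) \<le> RHS" if n: "1 \<le> n" and en: "e n \<le> 1/2" for n
  proof -
    interpret ch: chan K Q P \<pi> "mmn n" n "enc n"
    proof
      show "1 \<le> K" using K2 by simp
      show "1 \<le> Q" by (rule Q1)
      show "set_pmf P \<subseteq> state_set K Q" by (rule supp)
      show "\<pi> permutes {..<K}" by (rule perm)
      show "1 \<le> mmn n k" for k unfolding mmn_def using Rnn num_msgs_ge1 by auto
    qed
    have MSeq: "ch.MSg = msg_set F K n R" unfolding ch.MSg_def msg_set_def mmn_def
      by (intro PiE_cong) auto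
    have LSeq: "ch.LSt n = {ns. length ns = n \<and> set ns \<subseteq> state_set K Q}"
      unfolding ch.LSt_def ch.SSt_def ..
    define ind where "ind W ns = (if \<exists>k<K. dec n k (user_outputs n (enc n) W ns k) ns \<noteq> W k then 1 else 0 :: real)" for W ns
    have errEq: "(\<Sum>om\<in>ch.Omg. ch.wtg om * (if \<exists>k<K. dec n k (user_outputs n (enc n) (fst om) (snd om) k) (snd om) \<noteq> fst om k then 1 else 0)) = e n"
    proof -
      have "(\<Sum>om\<in>ch.Omg. ch.wtg om * (if \<exists>k<K. dec n k (user_outputs n (enc n) (fst om) (snd om) k) (snd om) \<noteq> fst om k then 1 else 0))
          = (\<Sum>W\<in>ch.MSg. \<Sum>ns\<in>ch.LSt n. ch.prl ns / card ch.MSg * ind W ns)"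
        unfolding ch.Omg_def ch.wtg_def ind_def by (subst sum.cartesian_product) (simp add: case_prod_unfold)
      also have "\<dots> = (1 / card ch.MSg) * (\<Sum>W\<in>ch.MSg. \<Sum>ns\<in>ch.LSt n. (\<Prod>t<n. pmf P (ns ! t)) * ind W ns)"
        unfolding sum_distrib_left
      proof (intro sum.cong refl)
        fix W ns assume "ns \<in> ch.LSt n"
        then have "length ns = n" unfolding ch.LSt_def by simp
        then show "ch.prl ns / card ch.MSg * ind W ns = 1 / card ch.MSg * ((\<Prod>t<n. pmf P (ns ! t)) * ind W ns)"
          by (simp add: ch.prl_nth)
      qed
      also have "\<dots> = e n" unfolding e_def error_prob_def MSeq LSeq ind_def ..
      finally show ?thesis .
    qed
    have e0: "0 \<le> e n"
    proof -
      interpret dstr ch.Omg ch.wtg by (rule ch.dstr_Om)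
      show ?thesis unfolding errEq[symmetric] using wnn by (intro sum_nonneg) auto
    qed
    have pe: "sum ch.wtg {om\<in>ch.Omg. ch.Wk k om \<noteq> dec n (\<pi> k) (user_outputs n (enc n) (fst om) (snd om) (\<pi> k)) (snd om)} \<le> e n"
      if k: "k < K" for k
      using ch.err_le[OF k, of "dec n"] errEq by simp
    have wb: "(\<Sum>k<K. \<omega> (\<pi> k) * ((1 - 2 * e n) * ln (mmn n (\<pi> k)) - 3)) \<le> real n * L * RHS"
      using ch.weighted_bound2[of \<omega> "e n" "dec n", OF omp en pe]
      unfolding RHS_def L_def ch.pk_def ch.Mx_def by simp
    have lower: "\<omega> (\<pi> k) * ((1 - 2 * e n) * real n * L * R (\<pi> k) - (ln 2 + 3))
        \<le> \<omega> (\<pi> k) * ((1 - 2 * e n) * ln (mmn n (\<pi> k)) - 3)" if k: "k < K" for k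
    proof (rule mult_left_mono[OF _ omp[OF k]])
      have lnm: "real n * R (\<pi> k) * L - ln 2 \<le> ln (mmn n (\<pi> k))"
        unfolding mmn_def L_def using piK[OF k] Rnn ln_num_msgs[of "R (\<pi> k)" n F] by simp
      have a: "0 \<le> 1 - 2 * e n" "1 - 2 * e n \<le> 1" using en e0 by auto
      have "(1 - 2 * e n) * (real n * R (\<pi> k) * L - ln 2) \<le> (1 - 2 * e n) * ln (mmn n (\<pi> k))"
        using lnm a by (intro mult_left_mono) auto
      moreover have "(1 - 2 * e n) * ln 2 \<le> ln 2" using a by (simp add: mult_left_le_one_le)
      ultimately show "(1 - 2 * e n) * real n * L * R (\<pi> k) - (ln 2 + 3) \<le> (1 - 2 * e n) * ln (mmn n (\<pi> k)) - 3"
        by (simp add: algebra_simps)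
    qed
    have "(1 - 2 * e n) * real n * L * S - c = (\<Sum>k<K. \<omega> (\<pi> k) * ((1 - 2 * e n) * real n * L * R (\<pi> k) - (ln 2 + 3)))"
      unfolding S_def c_def by (simp add: sum_distrib_left sum_distrib_right sum_subtractf sum.distrib algebra_simps)
    also have "\<dots> \<le> (\<Sum>k<K. \<omega> (\<pi> k) * ((1 - 2 * e n) * ln (mmn n (\<pi> k)) - 3))"
      using lower by (intro sum_mono) auto
    also have "\<dots> \<le> real n * L * RHS" by (rule wb)
    finally have h: "(1 - 2 * e n) * real n * L * S - c \<le> real n * L * RHS" .
    have nL: "0 < real n * L" using n L by simp
    have nL0: "real n * L \<noteq> 0" using nL by linarith
    have "((1 - 2 * e n) * S - c / (real n * L)) * (real n * L) = (1 - 2 * e n) * S * (real n * L) - c"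
      using nL0 by (simp add: left_diff_distrib)
    also have "\<dots> = (1 - 2 * e n) * real n * L * S - c" by (simp add: algebra_simps)
    also have "\<dots> \<le> RHS * (real n * L)" using h by (simp add: algebra_simps)
    finally show ?thesis using nL by (rule mult_right_le_imp_le)
  qed
  have tend: "(\<lambda>n. (1 - 2 * e n) * S - c / (real n * L)) \<longlonglongrightarrow> (1 - 2 * 0) * S - 0"
  proof (intro tendsto_intros)
    show "e \<longlonglongrightarrow> 0" using lim unfolding e_def .
    have "(\<lambda>n. (c / L) / real n) \<longlonglongrightarrow> 0" by (rule lim_const_over_n)
    moreover have "(\<lambda>n. (c / L) / real n) = (\<lambda>n. c / (real n * L))" by (simp add: field_simps)
    ultimately show "(\<lambda>n. c / (real n * L)) \<longlonglongrightarrow> 0" by simp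
  qed
  have ev: "\<exists>N. \<forall>n\<ge>N. (1 - 2 * e n) * S - c / (real n * L) \<le> RHS"
  proof -
    have "\<forall>\<^sub>F n in sequentially. e n < 1/2"
      using lim unfolding e_def by (rule order_tendstoD) simp
    then obtain N where N: "\<And>n. n \<ge> N \<Longrightarrow> e n < 1/2" unfolding eventually_sequentially by blast
    show ?thesis
      by (rule exI[of _ "max N 1"]) (auto intro!: key dest!: N)
  qed
  have "S \<le> RHS" using LIMSEQ_le_const2[OF tend ev] by simp
  moreover have "(\<Sum>k<K. \<omega> k * R k) = S"
    unfolding S_def using sum.reindex_bij_betw[OF permutes_imp_bij[OF perm], of "\<lambda>k. \<omega> k * R k"] by simp
  ultimately show ?thesis unfolding RHS_def by simp
qed


end
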